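(* Let $G$ be a quadrangulation of a disk $\Sigma$ with boundary cycle $B$, and let $\psi$ be a $3$-coloring of $B$ with winding number $\omega_\psi(B)=0$. Then $\psi$ extends to a $3$-coloring of $G$ if and only if every spoke $P$ and each base $Q$ of $P$ satisfy $|P|\ge|\delta_\psi(Q)|$.
   Context: Graphs may have parallel edges but no loops; colorings are proper with colors $\{1,2,3\}$. A quadrangulation of a disk is an embedded graph whose faces are all homeomorphic to open disks, bounded by cycles, and of length $4$; the boundary of the disk is a cycle $B$ of $G$. For a coloring $\psi$ and edge $uv$, $\delta_\psi(u,v)=1$ if $\psi(v)-\psi(u)\in\{1,-2\}$ and $-1$ otherwise; for a walk $W=u_1\ldots u_m$, $\delta_\psi(W)=\sum_{i=1}^{m-1}\delta_\psi(u_i,u_{i+1})$; for a closed walk $Q$, $\omega_\psi(Q)=\delta_\psi(Q)/3$. A spoke is a path $P$ in $G$ that intersects the boundary of the disk exactly in its two endpoints. A base of a spoke $P$ is a subpath $Q$ of $B$ with the same endpoints as $P$ (in a disk, each of the two subpaths of $B$ between the endpoints is a base). $|P|$ denotes the number of edges of $P$. *)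

theory Defs
  imports Complex_Main
begin

text \<open>A graph with parallel edges but no loops
  is given by a finite set of darts D, a tail map tail, the dart reversal rv (fixed-point free
  involution, each edge = pair of opposite darts) and a rotation sc (cyclic order of the
  darts around their common tail). Faces are the orbits of the face permutation
  sc o rv. A connected map with V - E + F = 2 is a cellular embedding in the sphere.\<close>

definition orb :: "('d \<Rightarrow> 'd) \<Rightarrow> 'd \<Rightarrow> 'd set" where
  "orb f d = {(f ^^ n) d | n. True}"

definition face_succ :: "('d \<Rightarrow> 'd) \<Rightarrow> ('d \<Rightarrow> 'd) \<Rightarrow> 'd \<Rightarrow> 'd" where
  "face_succ rv sc d = sc (rv d)"

definition map_connected :: "'d set \<Rightarrow> ('d \<Rightarrow> 'd) \<Rightarrow> ('d \<Rightarrow> 'd) \<Rightarrow> bool" where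
  "map_connected D rv sc \<longleftrightarrow>
     (\<forall>d\<in>D. \<forall>d'\<in>D. (d, d') \<in> ({(x, sc x) | x. x \<in> D} \<union> {(x, rv x) | x. x \<in> D})\<^sup>*)"

definition verts :: "'d set \<Rightarrow> ('d \<Rightarrow> 'v) \<Rightarrow> 'v set" where
  "verts D tail = tail ` D"

definition outer_face :: "('d \<Rightarrow> 'd) \<Rightarrow> ('d \<Rightarrow> 'd) \<Rightarrow> 'd \<Rightarrow> 'd set" where
  "outer_face rv sc d0 = orb (face_succ rv sc) d0"

definition bverts :: "('d \<Rightarrow> 'v) \<Rightarrow> ('d \<Rightarrow> 'd) \<Rightarrow> ('d \<Rightarrow> 'd) \<Rightarrow> 'd \<Rightarrow> 'v set" where
  "bverts tail rv sc d0 = tail ` outer_face rv sc d0"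

definition bvert :: "('d \<Rightarrow> 'v) \<Rightarrow> ('d \<Rightarrow> 'd) \<Rightarrow> ('d \<Rightarrow> 'd) \<Rightarrow> 'd \<Rightarrow> nat \<Rightarrow> 'v" where
  "bvert tail rv sc d0 i =
     tail ((face_succ rv sc ^^ (i mod card (outer_face rv sc d0))) d0)"

definition bwalk :: "('d \<Rightarrow> 'v) \<Rightarrow> ('d \<Rightarrow> 'd) \<Rightarrow> ('d \<Rightarrow> 'd) \<Rightarrow> 'd \<Rightarrow> 'v list" where
  "bwalk tail rv sc d0 = map (bvert tail rv sc d0) [0..<card (outer_face rv sc d0) + 1]"

text \<open>Quadrangulation of a disk: the map is a connected genus-0 map (sphere); the face
  containing dart d0 is the complement of the disk and is bounded by the cycle B; every
  other face (i.e. every face of the disk) is bounded by a cycle of length 4.\<close>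
definition disk_quadrangulation ::
  "'d set \<Rightarrow> ('d \<Rightarrow> 'v) \<Rightarrow> ('d \<Rightarrow> 'd) \<Rightarrow> ('d \<Rightarrow> 'd) \<Rightarrow> 'd \<Rightarrow> bool" where
  "disk_quadrangulation D tail rv sc d0 \<longleftrightarrow>
     finite D \<and> d0 \<in> D \<and>
     (\<forall>d\<in>D. rv d \<in> D \<and> rv (rv d) = d \<and> rv d \<noteq> d \<and> tail (rv d) \<noteq> tail d) \<and>
     bij_betw sc D D \<and>
     (\<forall>d\<in>D. orb sc d = {d'\<in>D. tail d' = tail d}) \<and>
     map_connected D rv sc \<and>
     int (card (verts D tail)) - int (card D div 2)
       + int (card {orb (face_succ rv sc) d | d. d \<in> D}) = 2 \<and>
     inj_on tail (outer_face rv sc d0) \<and>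
     (\<forall>d\<in>outer_face rv sc d0. rv d \<notin> outer_face rv sc d0) \<and>
     (\<forall>d\<in>D. d \<notin> outer_face rv sc d0 \<longrightarrow>
        card (orb (face_succ rv sc) d) = 4 \<and> inj_on tail (orb (face_succ rv sc) d))"

definition coloring :: "'d set \<Rightarrow> ('d \<Rightarrow> 'v) \<Rightarrow> ('d \<Rightarrow> 'd) \<Rightarrow> ('v \<Rightarrow> int) \<Rightarrow> bool" where
  "coloring D tail rv c \<longleftrightarrow>
     (\<forall>v\<in>verts D tail. c v \<in> {1, 2, 3}) \<and> (\<forall>d\<in>D. c (tail d) \<noteq> c (tail (rv d)))"

text \<open>A 3-coloring of the subgraph B (chords of B are not edges of B).\<close>
definition bcoloring :: "('d \<Rightarrow> 'v) \<Rightarrow> ('d \<Rightarrow> 'd) \<Rightarrow> ('d \<Rightarrow> 'd) \<Rightarrow> 'd \<Rightarrow> ('v \<Rightarrow> int) \<Rightarrow> bool" where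
  "bcoloring tail rv sc d0 c \<longleftrightarrow>
     (\<forall>v\<in>bverts tail rv sc d0. c v \<in> {1, 2, 3}) \<and>
     (\<forall>d\<in>outer_face rv sc d0. c (tail d) \<noteq> c (tail (rv d)))"

definition dlt :: "('v \<Rightarrow> int) \<Rightarrow> 'v \<Rightarrow> 'v \<Rightarrow> int" where
  "dlt c u v = (if c v - c u \<in> {1, -2} then 1 else -1)"

definition delta :: "('v \<Rightarrow> int) \<Rightarrow> 'v list \<Rightarrow> int" where
  "delta c W = sum_list (map (\<lambda>(u, v). dlt c u v) (zip W (List.tl W)))"

definition winding :: "('v \<Rightarrow> int) \<Rightarrow> 'v list \<Rightarrow> real" where
  "winding c Q = real_of_int (delta c Q) / 3"

definition dpath_verts :: "('d \<Rightarrow> 'v) \<Rightarrow> ('d \<Rightarrow> 'd) \<Rightarrow> 'd list \<Rightarrow> 'v list" where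
  "dpath_verts tail rv ps = map tail ps @ [tail (rv (last ps))]"

definition is_path :: "'d set \<Rightarrow> ('d \<Rightarrow> 'v) \<Rightarrow> ('d \<Rightarrow> 'd) \<Rightarrow> 'd list \<Rightarrow> bool" where
  "is_path D tail rv ps \<longleftrightarrow> ps \<noteq> [] \<and> set ps \<subseteq> D \<and>
     (\<forall>i. Suc i < length ps \<longrightarrow> tail (rv (ps ! i)) = tail (ps ! Suc i)) \<and>
     distinct (dpath_verts tail rv ps)"

definition spoke :: "'d set \<Rightarrow> ('d \<Rightarrow> 'v) \<Rightarrow> ('d \<Rightarrow> 'd) \<Rightarrow> ('d \<Rightarrow> 'd) \<Rightarrow> 'd \<Rightarrow> 'd list \<Rightarrow> bool" where
  "spoke D tail rv sc d0 ps \<longleftrightarrow> is_path D tail rv ps \<and>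
     (let W = dpath_verts tail rv ps in
        hd W \<in> bverts tail rv sc d0 \<and> last W \<in> bverts tail rv sc d0 \<and>
        (\<forall>v\<in>set (butlast (List.tl W)). v \<notin> bverts tail rv sc d0)) \<and>
     (\<forall>d\<in>set ps. d \<notin> outer_face rv sc d0 \<and> rv d \<notin> outer_face rv sc d0)"

definition base :: "('d \<Rightarrow> 'v) \<Rightarrow> ('d \<Rightarrow> 'd) \<Rightarrow> ('d \<Rightarrow> 'd) \<Rightarrow> 'd \<Rightarrow> 'd list \<Rightarrow> 'v list \<Rightarrow> bool" where
  "base tail rv sc d0 ps Q \<longleftrightarrow>
     (\<exists>i m. i < card (outer_face rv sc d0) \<and> m < card (outer_face rv sc d0) \<and>
        (Q = map (\<lambda>t. bvert tail rv sc d0 (i + t)) [0..<m + 1] \<or>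
         Q = rev (map (\<lambda>t. bvert tail rv sc d0 (i + t)) [0..<m + 1]))) \<and>
     hd Q = hd (dpath_verts tail rv ps) \<and> last Q = last (dpath_verts tail rv ps)"

end

theory Submission
  imports Defs "HOL-Library.Function_Algebras" "HOL-Library.Z2"
begin


locale pon =
  fixes p :: "'d \<Rightarrow> 'd" and D :: "'d set"
  assumes fin: "finite D" and inj: "inj_on p D" and into: "\<And>x. x \<in> D \<Longrightarrow> p x \<in> D"
begin

lemma pw_in: "d \<in> D \<Longrightarrow> (p ^^ n) d \<in> D"
  by (induction n) (auto intro: into)

lemma pw_cancel: "d \<in> D \<Longrightarrow> e \<in> D \<Longrightarrow> (p ^^ n) d = (p ^^ n) e \<Longrightarrow> d = e"
proof (induction n arbitrary: d e)
  case (Suc n)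
  then have "p ((p ^^ n) d) = p ((p ^^ n) e)" by (simp add: funpow_swap1)
  then have "(p ^^ n) d = (p ^^ n) e" using inj pw_in Suc.prems by (meson inj_on_eq_iff)
  then show ?case using Suc by blast
qed simp

lemma period_ex: assumes "d \<in> D" shows "\<exists>n>0. (p ^^ n) d = d"
proof -
  have "\<not> inj_on (\<lambda>i. (p ^^ i) d) {..card D}"
  proof
    assume "inj_on (\<lambda>i. (p ^^ i) d) {..card D}"
    then have "card ((\<lambda>i. (p ^^ i) d) ` {..card D}) = Suc (card D)" by (simp add: card_image)
    moreover have "(\<lambda>i. (p ^^ i) d) ` {..card D} \<subseteq> D" using pw_in assms by auto
    ultimately show False using card_mono[OF fin, of "(\<lambda>i. (p ^^ i) d) ` {..card D}"] by simp
  qed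
  then obtain i j where ij: "i \<le> card D" "j \<le> card D" "i \<noteq> j" "(p ^^ i) d = (p ^^ j) d"
    unfolding inj_on_def by auto
  have key: "\<exists>n>0. (p ^^ n) d = d" if "i < j" "(p ^^ i) d = (p ^^ j) d" for i j
  proof -
    have "(p ^^ i) ((p ^^ (j - i)) d) = (p ^^ i) d"
    proof -
      have "(p ^^ i) ((p ^^ (j - i)) d) = (p ^^ (i + (j - i))) d" by (simp only: funpow_add o_apply)
      also have "i + (j - i) = j" using \<open>i < j\<close> by simp
      finally show ?thesis using \<open>(p ^^ i) d = (p ^^ j) d\<close> by simp
    qed
    then have "(p ^^ (j - i)) d = d" using pw_cancel pw_in assms by blast
    then show "\<exists>n>0. (p ^^ n) d = d" using \<open>i<j\<close> by (intro exI[of _ "j - i"]) auto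
  qed
  show ?thesis
  proof (cases "i < j")
    case True then show ?thesis using key ij by blast
  next
    case False then have "j < i" using ij by simp
    then show ?thesis using key ij by metis
  qed
qed

definition per :: "'d \<Rightarrow> nat" where "per d = (LEAST n. n > 0 \<and> (p ^^ n) d = d)"

lemma per: assumes "d \<in> D" shows "per d > 0" "(p ^^ per d) d = d"
  "\<And>m. 0 < m \<Longrightarrow> m < per d \<Longrightarrow> (p ^^ m) d \<noteq> d"
proof -
  from period_ex[OF assms] obtain n where "n > 0 \<and> (p ^^ n) d = d" by blast
  then have "per d > 0 \<and> (p ^^ per d) d = d" unfolding per_def by (rule LeastI)
  then show "per d > 0" "(p ^^ per d) d = d" by auto
  show "\<And>m. 0 < m \<Longrightarrow> m < per d \<Longrightarrow> (p ^^ m) d \<noteq> d"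
    using not_less_Least unfolding per_def by blast
qed

lemma pw_mod: assumes "d \<in> D" shows "(p ^^ n) d = (p ^^ (n mod per d)) d"
proof -
  have "(p ^^ (per d * q)) d = d" for q
    by (induction q) (simp_all add: funpow_add per(2)[OF assms])
  have "(p ^^ n) d = (p ^^ (n mod per d + per d * (n div per d))) d" by simp
  also have "\<dots> = (p ^^ (n mod per d)) ((p ^^ (per d * (n div per d))) d)"
    by (simp only: funpow_add o_apply)
  also have "\<dots> = (p ^^ (n mod per d)) d" using \<open>\<And>q. (p ^^ (per d * q)) d = d\<close> by simp
  finally show ?thesis .
qed

lemma orb_eq: assumes "d \<in> D" shows "orb p d = (\<lambda>i. (p ^^ i) d) ` {..<per d}"
proof
  show "orb p d \<subseteq> (\<lambda>i. (p ^^ i) d) ` {..<per d}"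
  proof
    fix x assume "x \<in> orb p d"
    then obtain n where "x = (p ^^ n) d" unfolding orb_def by auto
    then have "x = (p ^^ (n mod per d)) d" using pw_mod[OF assms] by simp
    moreover have "n mod per d < per d" using per(1)[OF assms] by simp
    ultimately show "x \<in> (\<lambda>i. (p ^^ i) d) ` {..<per d}" by blast
  qed
qed (auto simp: orb_def)

lemma inj_per: assumes "d \<in> D" shows "inj_on (\<lambda>i. (p ^^ i) d) {..<per d}"
proof -
  have key: False if "i < j" "j < per d" "(p ^^ i) d = (p ^^ j) d" for i j
  proof -
    have "(p ^^ i) ((p ^^ (j - i)) d) = (p ^^ i) d"
    proof -
      have "(p ^^ i) ((p ^^ (j - i)) d) = (p ^^ (i + (j - i))) d" by (simp only: funpow_add o_apply)
      also have "i + (j - i) = j" using \<open>i < j\<close> by simp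
      finally show ?thesis using \<open>(p ^^ i) d = (p ^^ j) d\<close> by simp
    qed
    then have "(p ^^ (j - i)) d = d" using pw_cancel pw_in assms by blast
    then show False using per(3)[OF assms, of "j - i"] \<open>i<j\<close> \<open>j < per d\<close> by auto
  qed
  show ?thesis unfolding inj_on_def
  proof (intro ballI impI)
    fix x y assume xy: "x \<in> {..<per d}" "y \<in> {..<per d}" "(p ^^ x) d = (p ^^ y) d"
    show "x = y"
    proof (rule ccontr)
      assume "x \<noteq> y"
      then consider "x < y" | "y < x" by linarith
      then show False using key xy by (cases) (auto, metis)
    qed
  qed
qed

lemma card_orb: "d \<in> D \<Longrightarrow> card (orb p d) = per d"
  using orb_eq inj_per by (simp add: card_image)

lemma orb_sub: "d \<in> D \<Longrightarrow> orb p d \<subseteq> D"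
  unfolding orb_def using pw_in by auto

lemma fin_orb: "d \<in> D \<Longrightarrow> finite (orb p d)"
  using orb_sub fin finite_subset by blast

lemma self_orb: "d \<in> orb p d"
  unfolding orb_def by (auto intro: exI[of _ 0])

lemma pw_orb: "(p ^^ n) d \<in> orb p d"
  unfolding orb_def by auto

lemma p_orb: "x \<in> orb p d \<Longrightarrow> p x \<in> orb p d"
proof -
  assume "x \<in> orb p d"
  then obtain n where "x = (p ^^ n) d" unfolding orb_def by auto
  then have "p x = (p ^^ Suc n) d" by simp
  then show ?thesis unfolding orb_def by blast
qed

lemma orb_trans: "x \<in> orb p d \<Longrightarrow> orb p x \<subseteq> orb p d"
proof
  fix y assume "x \<in> orb p d" "y \<in> orb p x"
  then obtain n m where "x = (p ^^ n) d" "y = (p ^^ m) x" unfolding orb_def by auto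
  then have "y = (p ^^ (m + n)) d" by (simp add: funpow_add)
  then show "y \<in> orb p d" unfolding orb_def by blast
qed

lemma orb_sym: assumes "d \<in> D" "x \<in> orb p d" shows "d \<in> orb p x"
proof -
  obtain n where x: "x = (p ^^ n) d" using assms(2) unfolding orb_def by auto
  let ?m = "per d - n mod per d"
  have "(p ^^ ?m) x = (p ^^ (?m + n)) d" by (simp add: x funpow_add)
  also have "\<dots> = (p ^^ ((?m + n) mod per d)) d" using pw_mod assms by blast
  also have "(?m + n) mod per d = 0"
  proof -
    have lt: "n mod per d < per d" using per(1)[OF assms(1)] by simp
    have "(?m + n) mod per d = (?m + n mod per d) mod per d" by (simp add: mod_add_right_eq)
    also have "?m + n mod per d = per d" using lt by simp
    finally show ?thesis by simp
  qed
  finally show ?thesis unfolding orb_def by (auto intro: exI[of _ ?m])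
qed

lemma orb_eqI: "d \<in> D \<Longrightarrow> x \<in> orb p d \<Longrightarrow> orb p x = orb p d"
  using orb_trans orb_sym by (meson subset_antisym)

lemma orb_disj: "d \<in> D \<Longrightarrow> e \<in> D \<Longrightarrow> orb p d \<inter> orb p e \<noteq> {} \<Longrightarrow> orb p d = orb p e"
proof -
  assume a: "d \<in> D" "e \<in> D" "orb p d \<inter> orb p e \<noteq> {}"
  then obtain x where "x \<in> orb p d" "x \<in> orb p e" by blast
  then show ?thesis using orb_eqI a by metis
qed

lemma mem_orb_sym: "d \<in> D \<Longrightarrow> e \<in> D \<Longrightarrow> e \<in> orb p d \<longleftrightarrow> d \<in> orb p e"
  using orb_sym by blast

lemma p_img_orb: "d \<in> D \<Longrightarrow> p ` orb p d = orb p d"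
proof -
  assume d: "d \<in> D"
  have "p ` orb p d \<subseteq> orb p d" using p_orb by auto
  moreover have "inj_on p (orb p d)" using inj orb_sub[OF d] inj_on_subset by blast
  ultimately show ?thesis using card_subset_eq[OF fin_orb[OF d]] card_image by metis
qed

lemma sum_orb_shift: "d \<in> D \<Longrightarrow> (\<Sum>x\<in>orb p d. g (p x)) = (\<Sum>x\<in>orb p d. g x)"
proof -
  assume d: "d \<in> D"
  have "inj_on p (orb p d)" using inj orb_sub[OF d] inj_on_subset by blast
  then have "(\<Sum>x\<in>orb p d. g (p x)) = (\<Sum>x\<in>p ` orb p d. g x)" by (simp add: sum.reindex)
  then show ?thesis using p_img_orb[OF d] by simp
qed

end




abbreviation fsc :: "'a::field \<Rightarrow> ('x \<Rightarrow> 'a) \<Rightarrow> ('x \<Rightarrow> 'a)" where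
  "fsc c f \<equiv> (\<lambda>x. c * f x)"

lemma vs_fun: "vector_space (fsc :: 'a::field \<Rightarrow> ('x \<Rightarrow> 'a) \<Rightarrow> ('x \<Rightarrow> 'a))"
  by unfold_locales (auto simp: fun_eq_iff algebra_simps)

lemma sum_fun_apply: "(\<Sum>a\<in>A. f a) x = (\<Sum>a\<in>A. f a x)"
  by (induction A rule: infinite_finite_induct) auto

lemma indep_union_ker:
  fixes L :: "('x \<Rightarrow> 'a::field) \<Rightarrow> ('x \<Rightarrow> 'a)"
  assumes lin: "Vector_Spaces.linear fsc fsc L"
    and X: "\<not> module.dependent fsc (X)" "\<forall>x\<in>X. L x = 0"
    and S: "inj_on L S" "\<not> module.dependent fsc ((L ` S))"
  shows "\<not> module.dependent fsc (X \<union> S) \<and> X \<inter> S = {}"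
proof -
  interpret V: vector_space "fsc :: 'a \<Rightarrow> ('x \<Rightarrow> 'a) \<Rightarrow> ('x \<Rightarrow> 'a)" by (rule vs_fun)
  interpret L: Vector_Spaces.linear fsc fsc L by (rule lin)
  have disj: "X \<inter> S = {}"
  proof (rule ccontr)
    assume "X \<inter> S \<noteq> {}"
    then obtain x where "x \<in> X" "x \<in> S" by blast
    then have "L x = 0" using X(2) by blast
    then have "0 \<in> L ` S" using \<open>x \<in> S\<close> by (metis image_eqI)
    from V.dependent_zero[OF this] S(2) show False by simp
  qed
  have "V.independent (X \<union> S)"
    unfolding V.independent_explicit_module
  proof (intro allI impI)
    fix t u v assume t: "finite t" "t \<subseteq> X \<union> S" "(\<Sum>v\<in>t. fsc (u v) v) = 0" "v \<in> t"
    have split: "(\<Sum>v\<in>t. fsc (u v) v) = (\<Sum>v\<in>t \<inter> S. fsc (u v) v) + (\<Sum>v\<in>t - S. fsc (u v) v)"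
      by (rule sum.Int_Diff[OF t(1)])
    have "L (\<Sum>v\<in>t. fsc (u v) v) = 0" using t(3) L.zero by simp
    then have "(\<Sum>v\<in>t. fsc (u v) (L v)) = 0" by (simp add: L.sum L.scale)
    moreover have "(\<Sum>v\<in>t - S. fsc (u v) (L v)) = 0"
      using t(2) X(2) by (intro sum.neutral) (auto simp: fun_eq_iff)
    moreover have "(\<Sum>v\<in>t. fsc (u v) (L v)) = (\<Sum>v\<in>t \<inter> S. fsc (u v) (L v)) + (\<Sum>v\<in>t - S. fsc (u v) (L v))"
      by (rule sum.Int_Diff[OF t(1)])
    ultimately have z: "(\<Sum>v\<in>t \<inter> S. fsc (u v) (L v)) = 0" by simp
    have injt: "inj_on L (t \<inter> S)" using S(1) inj_on_subset by blast
    define w where "w = (\<lambda>y. u (the_inv_into (t \<inter> S) L y))"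
    have "(\<Sum>y\<in>L ` (t \<inter> S). fsc (w y) y) = (\<Sum>v\<in>t \<inter> S. fsc (u v) (L v))"
      using injt by (simp add: sum.reindex w_def the_inv_into_f_f)
    then have z2: "(\<Sum>y\<in>L ` (t \<inter> S). fsc (w y) y) = 0" using z by simp
    have uS: "u v = 0" if "v \<in> t \<inter> S" for v
    proof -
      have "w (L v) = 0"
        using V.independentD[OF S(2) _ _ z2] t(1) that by blast
      then show ?thesis using injt that by (simp add: w_def the_inv_into_f_f)
    qed
    have "(\<Sum>v\<in>t \<inter> S. fsc (u v) v) = 0" using uS by (intro sum.neutral) (auto simp: fun_eq_iff)
    then have "(\<Sum>v\<in>t - S. fsc (u v) v) = 0" using split t(3) by simp
    then have uX: "u v = 0" if "v \<in> t - S" for v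
      using V.independentD[OF X(1), of "t - S" u v] t that by blast
    show "u v = 0" using uS uX t(4) by blast
  qed
  then show ?thesis using disj by blast
qed




definition ind :: "'x \<Rightarrow> 'x \<Rightarrow> 'a::field" where
  "ind y = (\<lambda>x. if x = y then 1 else 0)"

definition sind :: "'x set \<Rightarrow> 'x \<Rightarrow> 'a::field" where
  "sind Y = (\<lambda>x. if x \<in> Y then 1 else 0)"

lemma ind_inj: "inj (ind :: 'x \<Rightarrow> 'x \<Rightarrow> 'a::field)"
  unfolding inj_def ind_def by (metis zero_neq_one)

lemma indep_ind: "\<not> module.dependent fsc ((ind :: 'x \<Rightarrow> 'x \<Rightarrow> 'a::field) ` A)"
proof -
  interpret V: vector_space "fsc :: 'a \<Rightarrow> ('x \<Rightarrow> 'a) \<Rightarrow> ('x \<Rightarrow> 'a)" by (rule vs_fun)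
  show ?thesis unfolding V.independent_explicit_module
  proof (intro allI impI)
    fix t u v assume t: "finite t" "t \<subseteq> ind ` A" "(\<Sum>v\<in>t. fsc (u v) v) = 0" "v \<in> t"
    then obtain a where a: "v = ind a" by blast
    have "0 = (\<Sum>w\<in>t. fsc (u w) w) a" using t(3) by simp
    also have "\<dots> = (\<Sum>w\<in>t. u w * w a)" by (simp add: sum_fun_apply)
    also have "\<dots> = (\<Sum>w\<in>t. if w = v then u w else 0)"
    proof (rule sum.cong)
      fix w assume "w \<in> t"
      then obtain b where b: "w = ind b" using t(2) by blast
      show "u w * w a = (if w = v then u w else 0)"
      proof (cases "b = a")
        case True then show ?thesis using a b by (simp add: ind_def)
      next
        case False
        then have "w a \<noteq> v a" using a b by (simp add: ind_def)
        then have "w \<noteq> v" by metis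
        moreover have "w a = 0" using False b by (simp add: ind_def)
        ultimately show ?thesis by simp
      qed
    qed simp
    also have "\<dots> = u v" using t(1) t(4) by simp
    finally show "u v = 0" by simp
  qed
qed

locale qmap =
  fixes D :: "'d set" and tail :: "'d \<Rightarrow> 'v" and rv sc :: "'d \<Rightarrow> 'd"
  assumes finD: "finite D"
    and rvD: "\<And>d. d \<in> D \<Longrightarrow> rv d \<in> D" and rvrv: "\<And>d. d \<in> D \<Longrightarrow> rv (rv d) = d"
    and rvne: "\<And>d. d \<in> D \<Longrightarrow> rv d \<noteq> d"
    and scbij: "bij_betw sc D D"
    and sctail: "\<And>d. d \<in> D \<Longrightarrow> orb sc d = {d'\<in>D. tail d' = tail d}"
    and conn: "map_connected D rv sc"
    and euler: "int (card (verts D tail)) - int (card D div 2)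
       + int (card {orb (face_succ rv sc) d | d. d \<in> D}) = 2"
begin

abbreviation "fs \<equiv> face_succ rv sc"

lemma scD: "d \<in> D \<Longrightarrow> sc d \<in> D" using scbij bij_betwE by blast

lemma fsD: "d \<in> D \<Longrightarrow> fs d \<in> D" unfolding face_succ_def using scD rvD by blast

lemma tail_sc: "d \<in> D \<Longrightarrow> tail (sc d) = tail d"
proof -
  assume "d \<in> D"
  have "sc d \<in> orb sc d" unfolding orb_def by (auto intro: exI[of _ 1])
  then show ?thesis using sctail \<open>d \<in> D\<close> by blast
qed

lemma tail_fs: "d \<in> D \<Longrightarrow> tail (fs d) = tail (rv d)"
  unfolding face_succ_def using tail_sc rvD by blast

lemma sc_rv: "d \<in> D \<Longrightarrow> sc d = fs (rv d)"
  unfolding face_succ_def using rvrv by simp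

lemma fs_inj: "inj_on fs D"
proof
  fix x y assume xy: "x \<in> D" "y \<in> D" "fs x = fs y"
  have "sc (rv x) = sc (rv y)" using xy(3) unfolding face_succ_def by simp
  then have "rv x = rv y" using scbij rvD xy unfolding bij_betw_def inj_on_def by blast
  then show "x = y" using rvrv xy by metis
qed

sublocale F: pon fs D
  by unfold_locales (auto simp: finD fs_inj fsD)

lemma Dne: "D \<noteq> {}"
  using euler by (auto simp: verts_def)

lemma conn_rt: "d \<in> D \<Longrightarrow> d' \<in> D \<Longrightarrow>
   (d, d') \<in> ({(x, sc x) | x. x \<in> D} \<union> {(x, rv x) | x. x \<in> D})\<^sup>*"
  using conn unfolding map_connected_def by blast

definition cA :: "('d \<Rightarrow> 'a::field) set" where
  "cA = {f. (\<forall>x. x \<notin> D \<longrightarrow> f x = 0) \<and> (\<forall>d\<in>D. f (rv d) = - f d)}"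

definition d1 :: "('d \<Rightarrow> 'a::field) \<Rightarrow> ('d \<Rightarrow> 'a)" where
  "d1 f = (\<lambda>d. if d \<in> D then \<Sum>x\<in>orb fs d. f x else 0)"

definition d0 :: "('v \<Rightarrow> 'a::field) \<Rightarrow> ('d \<Rightarrow> 'a)" where
  "d0 g = (\<lambda>d. if d \<in> D then g (tail (rv d)) - g (tail d) else 0)"

lemma d1_lin: "Vector_Spaces.linear fsc fsc (d1 :: ('d \<Rightarrow> 'a::field) \<Rightarrow> _)"
  unfolding Vector_Spaces.linear_iff
  by (auto simp: vs_fun d1_def fun_eq_iff sum.distrib sum_distrib_left)

lemma d0_lin: "Vector_Spaces.linear fsc fsc (d0 :: ('v \<Rightarrow> 'a::field) \<Rightarrow> _)"
  unfolding Vector_Spaces.linear_iff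
  by (auto simp: vs_fun d0_def fun_eq_iff algebra_simps)

lemma d1_add: "d1 (f + h) = d1 f + d1 h"
  by (simp add: d1_def fun_eq_iff sum.distrib)

lemma d1_diff: "d1 (f - h) = d1 f - d1 h"
  by (simp add: d1_def fun_eq_iff sum_subtractf)

lemma d1_ind: assumes "y \<in> D" shows "d1 (ind y) = (sind (orb fs y) :: 'd \<Rightarrow> 'a::field)"
proof
  fix d
  show "d1 (ind y) d = (sind (orb fs y) :: 'd \<Rightarrow> 'a) d"
  proof (cases "d \<in> D")
    case True
    have "d1 (ind y) d = (\<Sum>x\<in>orb fs d. if x = y then 1 else (0::'a))"
      using True by (simp add: d1_def ind_def)
    also have "\<dots> = (if y \<in> orb fs d then 1 else 0)"
      using F.fin_orb[OF True] by (simp add: sum.delta')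
    also have "\<dots> = sind (orb fs y) d"
      using F.mem_orb_sym[OF True assms] by (simp add: sind_def)
    finally show ?thesis .
  next
    case False
    then show ?thesis using F.orb_sub[OF assms] by (auto simp: d1_def sind_def)
  qed
qed

lemma d1_d0: "d1 (d0 g) = (0 :: 'd \<Rightarrow> 'a::field)"
proof
  fix d
  show "d1 (d0 g) d = (0 :: 'd \<Rightarrow> 'a) d"
  proof (cases "d \<in> D")
    case True
    have sub: "orb fs d \<subseteq> D" using F.orb_sub[OF True] .
    have "d1 (d0 g) d = (\<Sum>x\<in>orb fs d. g (tail (fs x)) - g (tail x))"
      unfolding d1_def d0_def using True sub tail_fs by (auto intro!: sum.cong)
    also have "\<dots> = (\<Sum>x\<in>orb fs d. g (tail (fs x))) - (\<Sum>x\<in>orb fs d. g (tail x))"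
      by (simp add: sum_subtractf)
    also have "(\<Sum>x\<in>orb fs d. g (tail (fs x))) = (\<Sum>x\<in>orb fs d. g (tail x))"
      using F.sum_orb_shift[OF True, of "\<lambda>x. g (tail x)"] by simp
    finally show ?thesis by simp
  qed (simp add: d1_def)
qed

lemma d0_cA: "d0 g \<in> cA"
  unfolding cA_def d0_def using rvD rvrv by auto

lemma cA_add: "f \<in> cA \<Longrightarrow> h \<in> cA \<Longrightarrow> f + h \<in> cA"
  unfolding cA_def by auto

lemma cA_ind: assumes y: "y \<in> D" shows "ind y - ind (rv y) \<in> cA"
proof -
  have e1: "(rv d = y) = (d = rv y)" if "d \<in> D" for d using rvrv that y by auto
  have e2: "(rv d = rv y) = (d = y)" if "d \<in> D" for d using rvrv that y by metis
  have "x \<noteq> y \<and> x \<noteq> rv y" if "x \<notin> D" for x using that y rvD by auto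
  then show ?thesis unfolding cA_def ind_def using e1 e2 rvne[OF y] by auto
qed

lemma face_step: assumes "(a :: 'd \<Rightarrow> 'a::field) \<in> cA" "d1 a = sind (orb fs y) - sind F0" "y \<in> D"
  shows "\<exists>a'\<in>cA. d1 a' = sind (orb fs (rv y)) - (sind F0 :: 'd \<Rightarrow> 'a::field)"
proof -
  let ?a = "a + (ind (rv y) - ind (rv (rv y)))"
  have "?a \<in> cA" using cA_add cA_ind rvD assms by blast
  moreover have "d1 ?a = sind (orb fs (rv y)) - sind F0"
    using assms rvD[OF assms(3)] rvrv[OF assms(3)] by (simp add: d1_add d1_diff d1_ind)
  ultimately show ?thesis by blast
qed

lemma faces_conn: assumes "dd \<in> D" "x \<in> D"
  shows "\<exists>a\<in>cA. d1 a = sind (orb fs x) - (sind (orb fs dd) :: 'd \<Rightarrow> 'a::field)"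
proof -
  have "(dd, x) \<in> ({(x, sc x) | x. x \<in> D} \<union> {(x, rv x) | x. x \<in> D})\<^sup>*"
    using conn_rt assms by blast
  then have "x \<in> D \<and> (\<exists>a\<in>cA. d1 a = sind (orb fs x) - (sind (orb fs dd) :: 'd \<Rightarrow> 'a::field))"
  proof (induction rule: rtrancl_induct)
    case base
    have "(0::'d \<Rightarrow> 'a) \<in> cA" by (simp add: cA_def)
    moreover have "d1 (0::'d \<Rightarrow> 'a) = 0" by (simp add: d1_def fun_eq_iff)
    ultimately show ?case using assms(1) by (metis diff_self)
  next
    case (step y z)
    have yD: "y \<in> D" using step.IH by (rule conjunct1)
    have a: "\<exists>a\<in>cA. d1 a = sind (orb fs y) - (sind (orb fs dd) :: 'd \<Rightarrow> 'a)"
      using step.IH by (rule conjunct2)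
    from step(2) consider "z = sc y" | "z = rv y" by blast
    then show ?case
    proof cases
      case 1
      have "orb fs z = orb fs (rv y)"
        using F.orb_eqI[of "rv y" z] rvD[OF yD] sc_rv[OF yD] 1 F.p_orb[OF F.self_orb] by metis
      then show ?thesis using face_step a yD 1 scD by metis
    next
      case 2
      then show ?thesis using face_step a yD rvD by metis
    qed
  qed
  then show ?thesis by blast
qed

lemma d0_zero: assumes "d0 g = 0" "dd \<in> D" "x \<in> D" shows "g (tail x) = g (tail dd)"
proof -
  have "(dd, x) \<in> ({(x, sc x) | x. x \<in> D} \<union> {(x, rv x) | x. x \<in> D})\<^sup>*"
    using conn_rt assms by blast
  then show ?thesis
  proof (induction rule: rtrancl_induct)
    case (step y z)
    then have yD: "y \<in> D" by auto
    from step(2) consider "z = sc y" | "z = rv y" by blast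
    then show ?case
    proof cases
      case 1 then show ?thesis using tail_sc yD step by simp
    next
      case 2
      have "d0 g y = 0" using assms(1) by simp
      then have "g (tail (rv y)) = g (tail y)" using yD by (simp add: d0_def)
      then show ?thesis using 2 step by simp
    qed
  qed simp
qed

definition R :: "'d set" where "R = {x\<in>D. x = (SOME y. y \<in> {x, rv x})}"

lemma R_props: "x \<in> D \<Longrightarrow> (x \<in> R \<and> rv x \<notin> R) \<or> (x \<notin> R \<and> rv x \<in> R)"
proof -
  assume x: "x \<in> D"
  let ?s = "SOME y. y \<in> {x, rv x}"
  have s: "?s \<in> {x, rv x}" by (rule someI) auto
  have eq: "{rv x, rv (rv x)} = {x, rv x}" using rvrv x by auto
  have "(SOME y. y \<in> {rv x, rv (rv x)}) = ?s" using eq by simp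
  then show ?thesis using s x rvD[OF x] rvne[OF x] unfolding R_def by auto
qed

lemma card_R: "card D = 2 * card R"
proof -
  have RD: "R \<subseteq> D" unfolding R_def by auto
  have "D = R \<union> rv ` R" using R_props RD rvD rvrv by (auto, metis image_eqI)
  moreover have "R \<inter> rv ` R = {}" using R_props RD by auto
  moreover have "inj_on rv R" using RD rvrv by (metis inj_on_def subsetD)
  moreover have "finite R" using RD finD finite_subset by blast
  ultimately show ?thesis by (metis card_Un_disjoint card_image finite_imageI mult_2)
qed

lemma cA_span:
  assumes "f \<in> (cA :: ('d \<Rightarrow> 'a::field) set)"
  shows "f \<in> module.span fsc ((\<lambda>d. ind d - ind (rv d)) ` R)"
proof -
  interpret V: vector_space "fsc :: 'a \<Rightarrow> ('d \<Rightarrow> 'a) \<Rightarrow> ('d \<Rightarrow> 'a)" by (rule vs_fun)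
  have RD: "R \<subseteq> D" unfolding R_def by auto
  have finR: "finite R" using RD finD finite_subset by blast
  have "f = (\<Sum>d\<in>R. fsc (f d) (ind d - ind (rv d)))"
  proof
    fix x
    have "(\<Sum>d\<in>R. fsc (f d) (ind d - ind (rv d))) x
        = (\<Sum>d\<in>R. f d * (if x = d then 1 else 0)) - (\<Sum>d\<in>R. f d * (if x \<in> D \<and> d = rv x then 1 else 0))"
    proof -
      have "(\<Sum>d\<in>R. fsc (f d) (ind d - ind (rv d))) x = (\<Sum>d\<in>R. f d * (ind d x - ind (rv d) x))"
        by (simp add: sum_fun_apply)
      also have "\<dots> = (\<Sum>d\<in>R. f d * (if x = d then 1 else 0) - f d * (if x \<in> D \<and> d = rv x then 1 else 0))"
      proof (rule sum.cong)
        fix d assume "d \<in> R"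
        then have "d \<in> D" using RD by blast
        then have "(x = rv d) = (x \<in> D \<and> d = rv x)" using rvrv[of d] rvrv[of x] rvD[of d] by auto
        then show "f d * (ind d x - ind (rv d) x) = f d * (if x = d then 1 else 0) - f d * (if x \<in> D \<and> d = rv x then 1 else 0)"
          by (simp add: ind_def algebra_simps)
      qed simp
      finally show ?thesis by (simp add: sum_subtractf)
    qed
    also have "\<dots> = (if x \<in> R then f x else 0) - (if x \<in> D \<and> rv x \<in> R then f (rv x) else 0)"
    proof -
      have 1: "(\<Sum>d\<in>R. f d * (if x = d then 1 else 0)) = (if x \<in> R then f x else 0)"
        using finR by (simp add: if_distrib sum.delta cong: if_cong)
      have 2: "(\<Sum>d\<in>R. f d * (if x \<in> D \<and> d = rv x then 1 else 0)) = (if x \<in> D \<and> rv x \<in> R then f (rv x) else 0)"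
      proof (cases "x \<in> D")
        case True then show ?thesis using finR by (simp add: if_distrib sum.delta' cong: if_cong)
      qed simp
      show ?thesis using 1 2 by simp
    qed
    also have "\<dots> = f x"
    proof (cases "x \<in> D")
      case True
      have "f (rv x) = - f x" using assms True unfolding cA_def by blast
      then show ?thesis using R_props[OF True] True by auto
    next
      case False
      then have "x \<notin> R" using RD by blast
      moreover have "f x = 0" using assms False unfolding cA_def by blast
      ultimately show ?thesis using False by simp
    qed
    finally show "f x = (\<Sum>d\<in>R. fsc (f d) (ind d - ind (rv d))) x" by simp
  qed
  also have "\<dots> \<in> V.span ((\<lambda>d. ind d - ind (rv d)) ` R)"
    by (intro V.span_sum V.span_scale V.span_base imageI) assumption
  finally show ?thesis .
qed


lemma sind_eq: "(sind A :: 'x \<Rightarrow> 'a::field) = sind B \<Longrightarrow> A = B"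
proof -
  assume e: "(sind A :: 'x \<Rightarrow> 'a::field) = sind B"
  show "A = B"
  proof (rule set_eqI)
    fix x
    have "(sind A :: 'x \<Rightarrow> 'a) x = sind B x" using e by simp
    then show "x \<in> A \<longleftrightarrow> x \<in> B" by (auto simp: sind_def split: if_splits)
  qed
qed

theorem cobound:
  fixes f :: "'d \<Rightarrow> 'a::field"
  assumes anti: "\<forall>d\<in>D. f (rv d) = - f d" and fsum: "\<forall>d\<in>D. (\<Sum>x\<in>orb fs d. f x) = 0"
  shows "\<exists>g :: 'v \<Rightarrow> 'a. \<forall>d\<in>D. f d = g (tail (rv d)) - g (tail d)"
proof -
  interpret V: vector_space "fsc :: 'a \<Rightarrow> ('d \<Rightarrow> 'a) \<Rightarrow> _" by (rule vs_fun)
  interpret W: vector_space "fsc :: 'a \<Rightarrow> ('v \<Rightarrow> 'a) \<Rightarrow> _" by (rule vs_fun)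
  interpret L0: Vector_Spaces.linear "fsc :: 'a \<Rightarrow> ('v \<Rightarrow> 'a) \<Rightarrow> _" "fsc :: 'a \<Rightarrow> ('d \<Rightarrow> 'a) \<Rightarrow> _" d0
    by (rule d0_lin)
  interpret L1: Vector_Spaces.linear "fsc :: 'a \<Rightarrow> ('d \<Rightarrow> 'a) \<Rightarrow> _" "fsc :: 'a \<Rightarrow> ('d \<Rightarrow> 'a) \<Rightarrow> _" d1
    by (rule d1_lin)
  obtain dd where dd: "dd \<in> D" using Dne by blast
  define f' where "f' = (\<lambda>x. if x \<in> D then f x else 0)"
  have f'A: "f' \<in> cA" using anti rvD by (auto simp: cA_def f'_def)
  have f'1: "d1 f' = 0"
  proof
    fix d show "d1 f' d = 0 d"
    proof (cases "d \<in> D")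
      case True
      have "d1 f' d = (\<Sum>x\<in>orb fs d. f x)"
        using True F.orb_sub[OF True] by (auto simp: d1_def f'_def intro!: sum.cong)
      then show ?thesis using fsum True by simp
    qed (simp add: d1_def)
  qed
  define Vs where "Vs = tail ` D"
  define v0 where "v0 = tail dd"
  have finV: "finite Vs" unfolding Vs_def using finD by simp
  have v0V: "v0 \<in> Vs" unfolding Vs_def v0_def using dd by simp
  define T where "T = (ind :: 'v \<Rightarrow> 'v \<Rightarrow> 'a) ` (Vs - {v0})"
  have T_ind: "W.independent T" unfolding T_def by (rule indep_ind)
  have spanT: "W.span T \<subseteq> {g. g v0 = 0 \<and> (\<forall>v. v \<notin> Vs \<longrightarrow> g v = 0)}"
  proof (rule W.span_minimal)
    show "T \<subseteq> {g. g v0 = 0 \<and> (\<forall>v. v \<notin> Vs \<longrightarrow> g v = 0)}"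
      unfolding T_def by (auto simp: ind_def)
    show "W.subspace {g. g v0 = 0 \<and> (\<forall>v. v \<notin> Vs \<longrightarrow> g v = 0)}"
      unfolding W.subspace_def by auto
  qed
  have inj0: "inj_on d0 (W.span T)"
  proof
    fix g h assume g: "g \<in> W.span T" and h: "h \<in> W.span T" and e: "d0 g = d0 h"
    have "d0 (g - h) = 0" using e by (simp add: L0.diff)
    then have c: "(g - h) (tail x) = (g - h) (tail dd)" if "x \<in> D" for x
      using d0_zero dd that by blast
    show "g = h"
    proof
      fix v show "g v = h v"
      proof (cases "v \<in> Vs")
        case True
        then obtain x where x: "x \<in> D" "v = tail x" unfolding Vs_def by blast
        have "(g - h) v = (g - h) v0" using c[OF x(1)] x(2) v0_def by simp
        also have "\<dots> = 0" using subsetD[OF spanT g] subsetD[OF spanT h] by simp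
        finally show ?thesis by simp
      next
        case False then show ?thesis using subsetD[OF spanT g] subsetD[OF spanT h] by simp
      qed
    qed
  qed
  define Y where "Y = d0 ` T"
  have Y_ind: "V.independent Y" unfolding Y_def
    by (rule L0.independent_injective_image[OF T_ind inj0])
  have cardY: "card Y = card Vs - 1"
  proof -
    have "inj_on d0 T" using inj0 W.span_superset inj_on_subset by blast
    then have "card Y = card T" unfolding Y_def by (simp add: card_image)
    also have "card T = card (Vs - {v0})" unfolding T_def
      using ind_inj inj_on_subset by (metis card_image subset_UNIV)
    also have "\<dots> = card Vs - 1" using v0V finV by simp
    finally show ?thesis .
  qed
  have finY: "finite Y" unfolding Y_def T_def using finV by simp
  show ?thesis
  proof (rule ccontr)
    assume nex: "\<not> ?thesis"
    have f'nY: "f' \<notin> V.span Y"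
    proof
      assume "f' \<in> V.span Y"
      then have "f' \<in> d0 ` W.span T" unfolding Y_def L0.span_image .
      then obtain g where "f' = d0 g" by blast
      then have "\<forall>d\<in>D. f d = g (tail (rv d)) - g (tail d)"
        by (auto simp: f'_def d0_def fun_eq_iff) (metis)
      then show False using nex by blast
    qed
    have X1: "V.independent (insert f' Y)" by (rule V.independent_insertI[OF f'nY Y_ind])
    have X1k: "\<forall>x\<in>insert f' Y. d1 x = 0" using f'1 d1_d0 unfolding Y_def by auto
    define Fs where "Fs = {orb fs d | d. d \<in> D}"
    define F0 where "F0 = orb fs dd"
    have F0Fs: "F0 \<in> Fs" unfolding Fs_def F0_def using dd by blast
    have finFs: "finite Fs"
    proof -
      have "Fs = (\<lambda>d. orb fs d) ` D" unfolding Fs_def by blast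
      then show ?thesis using finD by simp
    qed
    define s where "s Fc = (SOME a. a \<in> cA \<and> d1 a = sind Fc - (sind F0 :: 'd \<Rightarrow> 'a))" for Fc
    have s: "s Fc \<in> cA \<and> d1 (s Fc) = sind Fc - sind F0" if FcFs: "Fc \<in> Fs" for Fc
    proof -
      obtain x where x: "x \<in> D" "Fc = orb fs x" using FcFs unfolding Fs_def by blast
      have "\<exists>a\<in>cA. d1 a = sind Fc - (sind F0 :: 'd \<Rightarrow> 'a)"
        using faces_conn[OF dd x(1)] x(2) unfolding F0_def by blast
      then have "\<exists>a. a \<in> cA \<and> d1 a = sind Fc - (sind F0 :: 'd \<Rightarrow> 'a)" by blast
      then show ?thesis unfolding s_def by (rule someI_ex)
    qed
    define S where "S = s ` (Fs - {F0})"
    have injd: "inj_on (\<lambda>Fc. sind Fc - (sind F0 :: 'd \<Rightarrow> 'a)) (Fs - {F0})"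
      by (rule inj_onI) (simp add: sind_eq)
    have inj_s: "inj_on s (Fs - {F0})"
    proof (rule inj_onI)
      fix F1 F2 assume F: "F1 \<in> Fs - {F0}" "F2 \<in> Fs - {F0}" "s F1 = s F2"
      then have "sind F1 - (sind F0 :: 'd \<Rightarrow> 'a) = sind F2 - sind F0" using s by (metis DiffD1)
      then show "F1 = F2" using injd F unfolding inj_on_def by blast
    qed
    have d1S: "d1 ` S = (\<lambda>Fc. sind Fc - (sind F0 :: 'd \<Rightarrow> 'a)) ` (Fs - {F0})"
      unfolding S_def image_image using s by (intro image_cong) auto
    have injS: "inj_on d1 S"
    proof (rule inj_onI)
      fix a b assume ab: "a \<in> S" "b \<in> S" "d1 a = d1 b"
      then obtain F1 F2 where F: "F1 \<in> Fs - {F0}" "F2 \<in> Fs - {F0}" "a = s F1" "b = s F2"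
        unfolding S_def by blast
      then have "sind F1 - (sind F0 :: 'd \<Rightarrow> 'a) = sind F2 - sind F0" using s ab(3) by (metis DiffD1)
      then have "F1 = F2" using injd F unfolding inj_on_def by blast
      then show "a = b" using F by simp
    qed
    have S_ind: "V.independent (d1 ` S)"
      unfolding d1S V.independent_explicit_module
    proof (intro allI impI)
      fix t u w assume t: "finite t" "t \<subseteq> (\<lambda>Fc. sind Fc - (sind F0 :: 'd \<Rightarrow> 'a)) ` (Fs - {F0})"
        "(\<Sum>v\<in>t. fsc (u v) v) = 0" "w \<in> t"
      then obtain Fc where Fc: "Fc \<in> Fs" "Fc \<noteq> F0" "w = sind Fc - sind F0" by blast
      then obtain x where x: "x \<in> D" "Fc = orb fs x" unfolding Fs_def by blast
      have xF0: "x \<notin> F0"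
        using F.orb_disj[OF x(1) dd] F.self_orb[of x] Fc(2) x(2) unfolding F0_def by blast
      have "0 = (\<Sum>v\<in>t. fsc (u v) v) x" using t(3) by simp
      also have "\<dots> = (\<Sum>v\<in>t. u v * v x)" by (simp add: sum_fun_apply)
      also have "\<dots> = (\<Sum>v\<in>t. if v = w then u v else 0)"
      proof (rule sum.cong)
        fix v assume "v \<in> t"
        then obtain F1 where F1: "F1 \<in> Fs" "F1 \<noteq> F0" "v = sind F1 - sind F0" using t(2) by blast
        obtain y where y: "y \<in> D" "F1 = orb fs y" using F1(1) unfolding Fs_def by blast
        have "(x \<in> F1) = (F1 = Fc)"
          using F.orb_disj[OF x(1) y(1)] F.self_orb[of x] x(2) y(2) by blast
        moreover have "(v = w) = (F1 = Fc)"
          using injd F1 Fc unfolding inj_on_def by auto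
        ultimately show "u v * v x = (if v = w then u v else 0)"
          using xF0 F1(3) by (auto simp: sind_def)
      qed simp
      also have "\<dots> = u w" using t(1) t(4) by simp
      finally show "u w = 0" by simp
    qed
    have U: "V.independent (insert f' Y \<union> S) \<and> insert f' Y \<inter> S = {}"
      by (rule indep_union_ker[OF d1_lin X1 X1k injS S_ind])
    have cardS: "card S = card Fs - 1"
      unfolding S_def using card_image[OF inj_s] F0Fs finFs by simp
    have f'Y: "f' \<notin> Y" using f'nY V.span_superset by blast
    have finS: "finite S" unfolding S_def using finFs by simp
    have cardX: "card (insert f' Y \<union> S) = card Y + 1 + card S"
      using U f'Y finY finS by (simp add: card_Un_disjoint)
    have sub: "insert f' Y \<union> S \<subseteq> V.span ((\<lambda>d. ind d - ind (rv d)) ` R)"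
    proof -
      have "Y \<subseteq> cA" unfolding Y_def using d0_cA by blast
      moreover have "S \<subseteq> cA" unfolding S_def using s by blast
      ultimately have "insert f' Y \<union> S \<subseteq> cA" using f'A by blast
      then show ?thesis using cA_span by blast
    qed
    have RD: "R \<subseteq> D" unfolding R_def by auto
    have finR: "finite R" using RD finD finite_subset by blast
    have "card (insert f' Y \<union> S) \<le> card R"
      using conjunct2[OF V.independent_span_bound[OF finite_imageI[OF finR] conjunct1[OF U] sub]]
        card_image_le[OF finR] by (rule le_trans)
    then have le: "card Y + 1 + card S \<le> card R" using cardX by simp
    have "int (card Vs) - int (card R) + int (card Fs) = 2"
      using euler card_R unfolding Vs_def Fs_def verts_def by simp
    moreover have "card Vs \<ge> 1" using v0V finV by (metis One_nat_def Suc_leI card_gt_0_iff empty_iff)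
    moreover have "card Fs \<ge> 1" using F0Fs finFs by (metis One_nat_def Suc_leI card_gt_0_iff empty_iff)
    ultimately show False using le cardY cardS by linarith
  qed
qed

end




lemma dlt_anti: "c u \<in> {1,2,3} \<Longrightarrow> c v \<in> {1,2,3} \<Longrightarrow> c u \<noteq> c v \<Longrightarrow> dlt c v u = - dlt c u v"
  unfolding dlt_def by auto

lemma dlt_pm: "dlt c u v = 1 \<or> dlt c u v = -1"
  unfolding dlt_def by auto

lemma dlt_abs[simp]: "\<bar>dlt c u v\<bar> = 1"
  unfolding dlt_def by auto

lemma dlt_mod: "c u \<in> {1,2,3} \<Longrightarrow> c v \<in> {1,2,3} \<Longrightarrow> c u \<noteq> c v \<Longrightarrow> (3::int) dvd (dlt c u v - (c v - c u))"
  unfolding dlt_def by auto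

lemma zip_upt: "zip (map g [0..<Suc m]) (tl (map g [0..<Suc m])) = map (\<lambda>t. (g t, g (Suc t))) [0..<m]"
  by (rule nth_equalityI) (auto simp: nth_tl simp del: upt_Suc)

lemma delta_map: "delta c (map g [0..<Suc m]) = (\<Sum>t<m. dlt c (g t) (g (Suc t)))"
proof -
  have "delta c (map g [0..<Suc m]) = sum_list (map (\<lambda>t. dlt c (g t) (g (Suc t))) [0..<m])"
    unfolding delta_def zip_upt by (simp add: comp_def)
  also have "\<dots> = (\<Sum>t\<in>set [0..<m]. dlt c (g t) (g (Suc t)))"
    by (rule sum_set_upt_conv_sum_list_nat[symmetric])
  also have "\<dots> = (\<Sum>t<m. dlt c (g t) (g (Suc t)))" by (simp add: atLeast0LessThan)
  finally show ?thesis .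
qed

lemma tele: "W \<noteq> [] \<Longrightarrow> (\<And>u v. (u, v) \<in> set (zip W (tl W)) \<Longrightarrow> F u v = g v - g u) \<Longrightarrow>
  sum_list (map (\<lambda>(u, v). F u v) (zip W (tl W))) = (g (last W) - g (hd W) :: 'a::ab_group_add)"
proof (induction W)
  case (Cons x W)
  show ?case
  proof (cases W)
    case Nil then show ?thesis by simp
  next
    case (Cons y W')
    have "sum_list (map (\<lambda>(u, v). F u v) (zip W (tl W))) = g (last W) - g (hd W)"
      using Cons.IH Cons.prems \<open>W = y # W'\<close> by auto
    moreover have "F x y = g y - g x" using Cons.prems(2)[of x y] \<open>W = y # W'\<close> by simp
    ultimately show ?thesis using \<open>W = y # W'\<close> by simp
  qed
qed simp

lemma zip_rev_pair: assumes "(u, v) \<in> set (zip (rev W) (tl (rev W)))"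
  shows "(v, u) \<in> set (zip W (tl W))"
proof -
  obtain n where n: "rev W ! n = u" "tl (rev W) ! n = v" "n < length W" "n < length W - 1"
    using assms unfolding in_set_zip by auto
  let ?j = "length W - 2 - n"
  have "W ! ?j = v" using n by (simp add: nth_tl rev_nth)
  moreover have "tl W ! ?j = u"
  proof -
    have "Suc (length W - Suc (Suc n)) = length W - Suc n" using n by simp
    then show ?thesis using n by (simp add: nth_tl rev_nth)
  qed
  moreover have "?j < length W - 1" using n by simp
  ultimately show ?thesis unfolding in_set_zip by (intro exI[of _ ?j]) auto
qed

lemma sum_odd_parity: "finite A \<Longrightarrow> \<forall>x\<in>A. odd (h x :: int) \<Longrightarrow> (even (sum h A) \<longleftrightarrow> even (card A))"
  by (induction A rule: finite_induct) auto

lemma sum_list_abs_len: "(\<forall>x\<in>set xs. \<bar>f x\<bar> \<le> (1::real)) \<Longrightarrow> \<bar>sum_list (map f xs)\<bar> \<le> length xs"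
proof (induction xs)
  case (Cons a xs)
  have "\<bar>sum_list (map f (a # xs))\<bar> \<le> \<bar>f a\<bar> + \<bar>sum_list (map f xs)\<bar>" by (simp add: abs_triangle_ineq)
  then show ?case using Cons by auto
qed simp




fun wk :: "'d set \<Rightarrow> ('d \<Rightarrow> 'v) \<Rightarrow> ('d \<Rightarrow> 'd) \<Rightarrow> 'v \<Rightarrow> 'd list \<Rightarrow> 'v \<Rightarrow> bool" where
  "wk D tail rv u [] v = (u = v)"
| "wk D tail rv u (d # ps) v = (d \<in> D \<and> tail d = u \<and> wk D tail rv (tail (rv d)) ps v)"

fun vl :: "('d \<Rightarrow> 'v) \<Rightarrow> ('d \<Rightarrow> 'd) \<Rightarrow> 'v \<Rightarrow> 'd list \<Rightarrow> 'v list" where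
  "vl tail rv u [] = [u]"
| "vl tail rv u (d # ps) = u # vl tail rv (tail (rv d)) ps"

lemma wk_append: "wk D tail rv u (ps @ qs) w \<longleftrightarrow> (\<exists>v. wk D tail rv u ps v \<and> wk D tail rv v qs w)"
  by (induction ps arbitrary: u) auto

lemma vl_ne[simp]: "vl tail rv u ps \<noteq> []"
  by (cases ps) auto

lemma vl_last: "wk D tail rv u ps v \<Longrightarrow> last (vl tail rv u ps) = v"
  by (induction ps arbitrary: u) auto

lemma vl_hd: "hd (vl tail rv u ps) = u"
  by (cases ps) auto

lemma vl_len: "length (vl tail rv u ps) = Suc (length ps)"
  by (induction ps arbitrary: u) auto

lemma wk_dpath: "wk D tail rv u ps v \<Longrightarrow> ps \<noteq> [] \<Longrightarrow> dpath_verts tail rv ps = vl tail rv u ps"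
proof (induction ps arbitrary: u)
  case (Cons d ps)
  show ?case
  proof (cases ps)
    case Nil then show ?thesis using Cons by (simp add: dpath_verts_def)
  next
    case (Cons e qs)
    then have "dpath_verts tail rv ps = vl tail rv (tail (rv d)) ps"
      using Cons.IH Cons.prems by auto
    then show ?thesis using Cons.prems \<open>ps = e # qs\<close> by (simp add: dpath_verts_def)
  qed
qed simp

lemma wk_set: "wk D tail rv u ps v \<Longrightarrow> set ps \<subseteq> D"
  by (induction ps arbitrary: u) auto

lemma wk_consec: "wk D tail rv u ps v \<Longrightarrow> Suc i < length ps \<Longrightarrow> tail (rv (ps ! i)) = tail (ps ! Suc i)"
proof (induction ps arbitrary: u i)
  case (Cons d ps)
  show ?case
  proof (cases i)
    case 0 then show ?thesis using Cons.prems by (cases ps) auto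
  next
    case (Suc j) then show ?thesis using Cons by auto
  qed
qed simp

lemma consec_wk: "set ps \<subseteq> D \<Longrightarrow> (\<forall>i. Suc i < length ps \<longrightarrow> tail (rv (ps ! i)) = tail (ps ! Suc i))
   \<Longrightarrow> ps \<noteq> [] \<Longrightarrow> wk D tail rv (tail (hd ps)) ps (tail (rv (last ps)))"
proof (induction ps)
  case (Cons d ps)
  show ?case
  proof (cases ps)
    case Nil then show ?thesis using Cons by auto
  next
    case (Cons e qs)
    have "\<forall>i. Suc i < length ps \<longrightarrow> tail (rv (ps ! i)) = tail (ps ! Suc i)"
      using Cons.prems(2) by (metis Suc_less_eq length_Cons nth_Cons_Suc)
    then have "wk D tail rv (tail (hd ps)) ps (tail (rv (last ps)))" using Cons.IH Cons.prems \<open>ps = e # qs\<close> by auto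
    moreover have "tail (rv d) = tail (hd ps)" using Cons.prems(2)[rule_format, of 0] \<open>ps = e # qs\<close> by auto
    ultimately show ?thesis using Cons.prems \<open>ps = e # qs\<close> by auto
  qed
qed simp

lemma wk_tele: "wk D tail rv u ps v \<Longrightarrow> (g v :: 'a::ab_group_add) - g u = (\<Sum>d\<leftarrow>ps. g (tail (rv d)) - g (tail d))"
  by (induction ps arbitrary: u) (auto simp: algebra_simps)

lemma wk_suffix: "wk D tail rv u ps v \<Longrightarrow> x \<in> set (vl tail rv u ps) \<Longrightarrow> \<exists>m\<le>length ps. wk D tail rv x (drop m ps) v"
proof (induction ps arbitrary: u)
  case Nil then show ?case by auto
next
  case (Cons d ps)
  show ?case
  proof (cases "x = u")
    case True then show ?thesis using Cons.prems by (intro exI[of _ 0]) auto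
  next
    case False
    then have "x \<in> set (vl tail rv (tail (rv d)) ps)" using Cons.prems by auto
    then obtain m where "m \<le> length ps" "wk D tail rv x (drop m ps) v" using Cons by auto
    then show ?thesis by (intro exI[of _ "Suc m"]) auto
  qed
qed

lemma shortcut: "wk D tail rv u ps v \<Longrightarrow> \<not> distinct (vl tail rv u ps) \<Longrightarrow>
   \<exists>qs. wk D tail rv u qs v \<and> length qs < length ps"
proof (induction ps arbitrary: u)
  case Nil then show ?case by simp
next
  case (Cons d ps)
  show ?case
  proof (cases "u \<in> set (vl tail rv (tail (rv d)) ps)")
    case True
    then obtain m where "m \<le> length ps" "wk D tail rv u (drop m ps) v" using wk_suffix Cons.prems by force
    then show ?thesis by (intro exI[of _ "drop m ps"]) auto
  next
    case False
    then have "\<not> distinct (vl tail rv (tail (rv d)) ps)" using Cons.prems by simp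
    then obtain qs where "wk D tail rv (tail (rv d)) qs v" "length qs < length ps" using Cons by auto
    then show ?thesis using Cons.prems by (intro exI[of _ "d # qs"]) auto
  qed
qed


locale dq = qmap D tail rv sc for D :: "'d set" and tail :: "'d \<Rightarrow> 'v" and rv sc +
  fixes d0 :: 'd
  assumes d0D: "d0 \<in> D"
    and injO: "inj_on tail (orb (face_succ rv sc) d0)"
    and noB2: "\<And>d. d \<in> orb (face_succ rv sc) d0 \<Longrightarrow> rv d \<notin> orb (face_succ rv sc) d0"
    and inner: "\<And>d. d \<in> D \<Longrightarrow> d \<notin> orb (face_succ rv sc) d0 \<Longrightarrow> card (orb (face_succ rv sc) d) = 4"
begin

definition "Ou = orb fs d0"
definition "k = card Ou"
definition "ob n = (fs ^^ n) d0"
definition "bv n = tail (ob n)"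

lemma k_per: "k = F.per d0" unfolding k_def Ou_def using F.card_orb[OF d0D] .

lemma kpos: "k > 0" using k_per F.per(1)[OF d0D] by simp

lemma ob_mod: "ob n = ob (n mod k)" unfolding ob_def k_per using F.pw_mod[OF d0D] .

lemma bv_mod: "bv n = bv (n mod k)" unfolding bv_def using ob_mod by simp

lemma bv_add_k: "bv (n + k) = bv n" using bv_mod[of "n + k"] bv_mod[of n] by simp

lemma ob_Ou: "ob n \<in> Ou" unfolding ob_def Ou_def by (rule F.pw_orb)

lemma OuD: "Ou \<subseteq> D" unfolding Ou_def using F.orb_sub[OF d0D] .

lemma ob_D: "ob n \<in> D" using ob_Ou OuD by blast

lemma Ou_ob: "d \<in> Ou \<Longrightarrow> \<exists>n<k. d = ob n"
  unfolding Ou_def using F.orb_eq[OF d0D] k_per ob_def by auto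

lemma Ou_eq: "Ou = ob ` {..<k}"
  unfolding Ou_def k_per ob_def using F.orb_eq[OF d0D] .

lemma ob_inj: "inj_on ob {..<k}"
  unfolding k_per ob_def using F.inj_per[OF d0D] .

lemma bv_inj: "inj_on bv {..<k}"
proof -
  have "inj_on tail (ob ` {..<k})" using injO Ou_eq unfolding Ou_def by simp
  then show ?thesis unfolding bv_def using ob_inj comp_inj_on[of ob "{..<k}" tail] by (simp add: comp_def)
qed

lemma fs_ob: "fs (ob n) = ob (Suc n)" unfolding ob_def by simp

lemma tail_rv_ob: "tail (rv (ob n)) = bv (Suc n)"
  unfolding bv_def using tail_fs[OF ob_D] fs_ob by simp

lemma bvert_eq: "bvert tail rv sc d0 n = bv n"
  unfolding bvert_def outer_face_def bv_def using ob_mod[of n] unfolding ob_def k_def Ou_def by simp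

lemma outer_eq: "outer_face rv sc d0 = Ou" unfolding outer_face_def Ou_def ..

lemma bverts_eq: "bverts tail rv sc d0 = range bv"
proof -
  have "bverts tail rv sc d0 = tail ` Ou" unfolding bverts_def outer_eq ..
  also have "\<dots> = bv ` {..<k}" unfolding Ou_eq bv_def by (simp add: image_image)
  also have "\<dots> = range bv"
  proof
    show "range bv \<subseteq> bv ` {..<k}"
    proof
      fix x assume "x \<in> range bv"
      then obtain n where "x = bv n" by blast
      then have "x = bv (n mod k)" using bv_mod by simp
      then show "x \<in> bv ` {..<k}" using kpos by simp
    qed
  qed auto
  finally show ?thesis .
qed

lemma Bedge1: "d \<in> Ou \<Longrightarrow> \<exists>n. tail d = bv n \<and> tail (rv d) = bv (Suc n)"
proof -
  assume "d \<in> Ou"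
  then obtain n where "d = ob n" using Ou_ob by blast
  then show ?thesis by (intro exI[of _ n]) (simp add: bv_def tail_rv_ob)
qed

lemma Bedge2: "d \<in> D \<Longrightarrow> rv d \<in> Ou \<Longrightarrow> \<exists>n. tail d = bv (Suc n) \<and> tail (rv d) = bv n"
  using Bedge1[of "rv d"] rvrv by auto

lemma Bedge_verts: "d \<in> D \<Longrightarrow> d \<in> Ou \<or> rv d \<in> Ou \<Longrightarrow> tail d \<in> range bv \<and> tail (rv d) \<in> range bv"
  using Bedge1 Bedge2 by blast

definition idx :: "'v \<Rightarrow> nat" where "idx v = (THE i. i < k \<and> bv i = v)"

lemma idx_bv: "idx (bv n) = n mod k"
proof -
  have u: "i = n mod k" if "i < k" "bv i = bv n" for i
    using bv_inj that bv_mod[of n] kpos unfolding inj_on_def by (metis lessThan_iff mod_less_divisor)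
  have "n mod k < k \<and> bv (n mod k) = bv n" using kpos bv_mod by simp
  then show ?thesis unfolding idx_def using u by (intro the_equality) auto
qed

lemma bv_idx: "v \<in> range bv \<Longrightarrow> bv (idx v) = v"
  using idx_bv bv_mod by auto

lemma idx_lt: "v \<in> range bv \<Longrightarrow> idx v < k"
  using idx_bv kpos by auto

end




context dq
begin

lemma bwalk_eq: "bwalk tail rv sc d0 = map bv [0..<Suc k]"
  unfolding bwalk_def outer_eq k_def[symmetric] bvert_eq by simp

lemma bwalk_delta: "delta c (bwalk tail rv sc d0) = (\<Sum>t<k. dlt c (bv t) (bv (Suc t)))"
  unfolding bwalk_eq by (rule delta_map)

lemma tail_D_verts: "d \<in> D \<Longrightarrow> tail d \<in> verts D tail" unfolding verts_def by simp

lemma face_sum_zero: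
  fixes \<phi> :: "'v \<Rightarrow> int"
  assumes col: "coloring D tail rv \<phi>"
    and B0: "(\<Sum>t<k. dlt \<phi> (bv t) (bv (Suc t))) = 0"
    and d: "d \<in> D"
  shows "(\<Sum>x\<in>orb fs d. dlt \<phi> (tail x) (tail (rv x))) = 0"
proof (cases "d \<in> Ou")
  case True
  then have "orb fs d = Ou" unfolding Ou_def using F.orb_eqI[OF d0D] by blast
  then have "(\<Sum>x\<in>orb fs d. dlt \<phi> (tail x) (tail (rv x))) = (\<Sum>x\<in>ob ` {..<k}. dlt \<phi> (tail x) (tail (rv x)))"
    using Ou_eq by simp
  also have "\<dots> = (\<Sum>n<k. dlt \<phi> (tail (ob n)) (tail (rv (ob n))))"
    using ob_inj by (simp add: sum.reindex)
  also have "\<dots> = (\<Sum>t<k. dlt \<phi> (bv t) (bv (Suc t)))" by (simp add: bv_def[symmetric] tail_rv_ob)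
  finally show ?thesis using B0 by simp
next
  case False
  have c4: "card (orb fs d) = 4" using inner[OF d] False unfolding Ou_def by blast
  have sub: "orb fs d \<subseteq> D" using F.orb_sub[OF d] .
  have fin: "finite (orb fs d)" using F.fin_orb[OF d] .
  have cv: "\<phi> (tail x) \<in> {1,2,3}" "\<phi> (tail (rv x)) \<in> {1,2,3}" "\<phi> (tail x) \<noteq> \<phi> (tail (rv x))"
    if "x \<in> D" for x
    using col that rvD[OF that] unfolding coloring_def verts_def by auto
  let ?S = "\<Sum>x\<in>orb fs d. dlt \<phi> (tail x) (tail (rv x))"
  have diff0: "(\<Sum>x\<in>orb fs d. \<phi> (tail (rv x)) - \<phi> (tail x)) = 0"
  proof -
    have "(\<Sum>x\<in>orb fs d. \<phi> (tail (rv x))) = (\<Sum>x\<in>orb fs d. \<phi> (tail (fs x)))"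
      using sub tail_fs by (intro sum.cong) auto
    also have "\<dots> = (\<Sum>x\<in>orb fs d. \<phi> (tail x))" using F.sum_orb_shift[OF d, of "\<lambda>x. \<phi> (tail x)"] by simp
    finally show ?thesis by (simp add: sum_subtractf)
  qed
  have "(3::int) dvd (\<Sum>x\<in>orb fs d. dlt \<phi> (tail x) (tail (rv x)) - (\<phi> (tail (rv x)) - \<phi> (tail x)))"
    using sub cv by (intro dvd_sum dlt_mod) auto
  then have d3: "(3::int) dvd ?S" using diff0 by (simp add: sum_subtractf)
  have ev: "even ?S"
    using sum_odd_parity[OF fin, of "\<lambda>x. dlt \<phi> (tail x) (tail (rv x))"] c4 dlt_pm
    by (metis even_numeral odd_one even_minus)
  have "\<bar>?S\<bar> \<le> (\<Sum>x\<in>orb fs d. \<bar>dlt \<phi> (tail x) (tail (rv x))\<bar>)" by (rule sum_abs)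
  also have "\<dots> = (\<Sum>x\<in>orb fs d. 1)" by (intro sum.cong) simp_all
  also have "\<dots> = 4" using c4 by simp
  finally have "\<bar>?S\<bar> \<le> 4" .
  then show ?thesis using d3 ev by presburger
qed

lemma easy:
  fixes \<phi> \<psi> :: "'v \<Rightarrow> int"
  assumes col: "coloring D tail rv \<phi>" and ext: "\<forall>v\<in>range bv. \<phi> v = \<psi> v"
    and w: "winding \<psi> (bwalk tail rv sc d0) = 0"
    and sp: "spoke D tail rv sc d0 P" and bs: "base tail rv sc d0 P Q"
  shows "int (length P) \<ge> \<bar>delta \<psi> Q\<bar>"
proof -
  define f where "f d = real_of_int (dlt \<phi> (tail d) (tail (rv d)))" for d
  have cv: "\<phi> (tail x) \<in> {1,2,3}" "\<phi> (tail (rv x)) \<in> {1,2,3}" "\<phi> (tail x) \<noteq> \<phi> (tail (rv x))"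
    if "x \<in> D" for x
    using col that rvD[OF that] unfolding coloring_def verts_def by auto
  have anti: "\<forall>d\<in>D. f (rv d) = - f d"
  proof
    fix d assume d: "d \<in> D"
    have "dlt \<phi> (tail (rv d)) (tail d) = - dlt \<phi> (tail d) (tail (rv d))"
      using dlt_anti[of \<phi> "tail d" "tail (rv d)"] cv[OF d] by blast
    then show "f (rv d) = - f d" unfolding f_def using rvrv[OF d] by simp
  qed
  have dpsi: "delta \<psi> (bwalk tail rv sc d0) = 0" using w unfolding winding_def by simp
  have "(\<Sum>t<k. dlt \<phi> (bv t) (bv (Suc t))) = (\<Sum>t<k. dlt \<psi> (bv t) (bv (Suc t)))"
    using ext by (intro sum.cong refl) (simp add: dlt_def)
  then have B0: "(\<Sum>t<k. dlt \<phi> (bv t) (bv (Suc t))) = 0"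
    using dpsi unfolding bwalk_delta by simp
  have fsum: "\<forall>d\<in>D. (\<Sum>x\<in>orb fs d. f x) = 0"
    using face_sum_zero[OF col B0] unfolding f_def by (metis of_int_0 of_int_sum)
  obtain g :: "'v \<Rightarrow> real" where g: "\<forall>d\<in>D. f d = g (tail (rv d)) - g (tail d)"
    using cobound[OF anti fsum] by blast
  have ip: "is_path D tail rv P" using sp unfolding spoke_def by blast
  then have Pne: "P \<noteq> []" and PD: "set P \<subseteq> D"
    and cons: "\<forall>i. Suc i < length P \<longrightarrow> tail (rv (P ! i)) = tail (P ! Suc i)"
    unfolding is_path_def by auto
  have wkP: "wk D tail rv (tail (hd P)) P (tail (rv (last P)))" using consec_wk[OF PD cons Pne] .
  define W where "W = dpath_verts tail rv P"
  have W: "W = vl tail rv (tail (hd P)) P" unfolding W_def using wk_dpath[OF wkP Pne] .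
  have hdW: "hd W = tail (hd P)" unfolding W by (rule vl_hd)
  have lastW: "last W = tail (rv (last P))" unfolding W using vl_last[OF wkP] .
  have "g (last W) - g (hd W) = (\<Sum>d\<leftarrow>P. g (tail (rv d)) - g (tail d))"
    unfolding hdW lastW by (rule wk_tele[OF wkP])
  also have "\<dots> = (\<Sum>d\<leftarrow>P. f d)" using g PD by (intro arg_cong[where f=sum_list] map_cong) auto
  finally have gP: "g (last W) - g (hd W) = (\<Sum>d\<leftarrow>P. f d)" .
  have "\<bar>\<Sum>d\<leftarrow>P. f d\<bar> \<le> length P"
    by (intro sum_list_abs_len) (simp add: f_def flip: of_int_abs)
  then have bndP: "\<bar>g (last W) - g (hd W)\<bar> \<le> length P" using gP by simp
  have dltext: "dlt \<phi> (bv a) (bv b) = dlt \<psi> (bv a) (bv b)" for a b using ext by (simp add: dlt_def)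
  have pairf: "real_of_int (dlt \<psi> (bv j) (bv (Suc j))) = g (bv (Suc j)) - g (bv j)" for j
  proof -
    have "f (ob j) = g (bv (Suc j)) - g (bv j)" using g ob_D tail_rv_ob bv_def by simp
    then show ?thesis using dltext unfolding f_def bv_def[symmetric] tail_rv_ob by simp
  qed
  have pairb: "real_of_int (dlt \<psi> (bv (Suc j)) (bv j)) = g (bv j) - g (bv (Suc j))" for j
  proof -
    have "rv (ob j) \<in> D" using rvD ob_D by blast
    then have "f (rv (ob j)) = g (bv j) - g (bv (Suc j))"
      using g rvrv[OF ob_D] tail_rv_ob bv_def by simp
    then show ?thesis using dltext rvrv[OF ob_D] unfolding f_def bv_def[symmetric] tail_rv_ob by (simp add: bv_def)
  qed
  obtain i m where Qc: "Q = map (\<lambda>t. bv (i + t)) [0..<Suc m] \<or> Q = rev (map (\<lambda>t. bv (i + t)) [0..<Suc m])"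
    and hdQ: "hd Q = hd W" and lastQ: "last Q = last W"
    using bs unfolding base_def bvert_eq W_def by auto
  define Qf where "Qf = map (\<lambda>t. bv (i + t)) [0..<Suc m]"
  have Qfpairs: "\<exists>j. u = bv j \<and> v = bv (Suc j)" if "(u, v) \<in> set (zip Qf (tl Qf))" for u v
    using that unfolding Qf_def zip_upt by auto
  have Qne: "Q \<noteq> []" using Qc by auto
  have "real_of_int (delta \<psi> Q) = sum_list (map (\<lambda>(u, v). real_of_int (dlt \<psi> u v)) (zip Q (tl Q)))"
    unfolding delta_def by (simp add: sum_list_of_int[symmetric] comp_def case_prod_unfold)
  also have "\<dots> = g (last Q) - g (hd Q)"
  proof (rule tele[OF Qne])
    fix u v assume uv: "(u, v) \<in> set (zip Q (tl Q))"
    show "real_of_int (dlt \<psi> u v) = g v - g u"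
    proof (cases "Q = Qf")
      case True
      then obtain j where "u = bv j" "v = bv (Suc j)" using Qfpairs uv by blast
      then show ?thesis using pairf by simp
    next
      case False
      then have Qr: "Q = rev Qf" using Qc unfolding Qf_def by blast
      have "(v, u) \<in> set (zip Qf (tl Qf))" using zip_rev_pair[of u v Qf] uv unfolding Qr by blast
      then obtain j where "v = bv j" "u = bv (Suc j)" using Qfpairs by blast
      then show ?thesis using pairb by simp
    qed
  qed
  finally have "real_of_int (delta \<psi> Q) = g (last W) - g (hd W)" using hdQ lastQ by simp
  then have "\<bar>real_of_int (delta \<psi> Q)\<bar> \<le> real (length P)" using bndP by simp
  then show ?thesis by linarith
qed

end




lemma bit_of_nat_even: "even n \<Longrightarrow> (of_nat n :: bit) = 0"
proof -
  assume "even n"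
  then obtain m where "n = 2 * m" by blast
  then show ?thesis by simp
qed

lemma ar_step: "(a::int) \<le> b + 1 \<Longrightarrow> b \<le> a + 1 \<Longrightarrow> 2 dvd (b - s + t) \<Longrightarrow> 2 dvd (a - (1 - s) + t)
  \<Longrightarrow> a = b + 1 \<or> a = b - 1" by presburger

lemma ar_col: assumes "(a::int) = b + 1 \<or> a = b - 1" shows "(c + b) mod 3 + 1 \<noteq> (c + a) mod 3 + 1"
proof
  assume "(c + b) mod 3 + 1 = (c + a) mod 3 + 1"
  then have "(c + b) mod 3 = (c + a) mod 3" by simp
  then have "(3::int) dvd ((c + b) - (c + a))" by (simp add: mod_eq_dvd_iff)
  then show False using assms by auto
qed

lemma ar_ext: "(3::int) dvd (p - p0 - x) \<Longrightarrow> p \<in> {1,2,3} \<Longrightarrow> (p0 - 1 + x) mod 3 + 1 = p" by auto presburger+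

lemma ar_range: "(x::int) mod 3 + 1 \<in> {1,2,3}" by auto

lemma ar_par: "(2::int) dvd (sv - sb - dd) \<Longrightarrow> 2 dvd (sb - s0 - h) \<Longrightarrow> 2 dvd ((h + dd) - sv + s0)" by presburger

lemma bit_cases: "(b::bit) = 0 \<or> b = 1" by (cases b) auto

context dq
begin

lemma conn_wk: assumes "x \<in> D" "y \<in> D" shows "\<exists>ps. wk D tail rv (tail x) ps (tail y)"
proof -
  have "(x, y) \<in> ({(x, sc x) | x. x \<in> D} \<union> {(x, rv x) | x. x \<in> D})\<^sup>*"
    using conn_rt assms by blast
  then show ?thesis
  proof (induction rule: rtrancl_induct)
    case base show ?case by (intro exI[of _ "[]"]) simp
  next
    case (step y z)
    then obtain ps where ps: "wk D tail rv (tail x) ps (tail y)" by blast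
    from step(2) consider "z = sc y" "y \<in> D" | "z = rv y" "y \<in> D" by blast
    then show ?case
    proof cases
      case 1 then show ?thesis using ps tail_sc by auto
    next
      case 2
      have "wk D tail rv (tail x) (ps @ [y]) (tail z)" using ps 2 by (auto simp: wk_append)
      then show ?thesis by blast
    qed
  qed
qed

definition dist :: "'v \<Rightarrow> 'v \<Rightarrow> nat" where
  "dist u v = (LEAST n. \<exists>ps. wk D tail rv u ps v \<and> length ps = n)"

lemma dist_le: "wk D tail rv u ps v \<Longrightarrow> dist u v \<le> length ps"
  unfolding dist_def by (rule Least_le) blast

lemma dist_wk: "wk D tail rv u ps v \<Longrightarrow> \<exists>qs. wk D tail rv u qs v \<and> length qs = dist u v"
  unfolding dist_def by (rule LeastI_ex) blast

lemma wk_nth: "wk D tail rv u qs v \<Longrightarrow> j < length qs \<Longrightarrow>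
   tail (qs ! j) = vl tail rv u qs ! j \<and> tail (rv (qs ! j)) = vl tail rv u qs ! Suc j"
proof (induction qs arbitrary: u j)
  case (Cons d qs)
  show ?case
  proof (cases j)
    case 0 then show ?thesis using Cons.prems by (cases qs) auto
  next
    case (Suc i) then show ?thesis using Cons by auto
  qed
qed simp

lemma first_ret: "wk D tail rv u ps w \<Longrightarrow> ps \<noteq> [] \<Longrightarrow> w \<in> range bv \<Longrightarrow>
  \<exists>qs rs c. ps = qs @ rs \<and> qs \<noteq> [] \<and> wk D tail rv u qs c \<and> wk D tail rv c rs w \<and> c \<in> range bv \<and>
    (\<forall>x\<in>set (butlast (tl (vl tail rv u qs))). x \<notin> range bv)"
proof (induction ps arbitrary: u)
  case Nil then show ?case by simp
next
  case (Cons d ps)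
  let ?c1 = "tail (rv d)"
  have w1: "wk D tail rv ?c1 ps w" and dD: "d \<in> D" "tail d = u" using Cons.prems by auto
  show ?case
  proof (cases "?c1 \<in> range bv")
    case True
    then show ?thesis using w1 dD by (intro exI[of _ "[d]"] exI[of _ ps] exI[of _ ?c1]) auto
  next
    case False
    have "ps \<noteq> []" using False w1 Cons.prems(3) by (cases ps) auto
    then obtain qs rs c where IH: "ps = qs @ rs" "qs \<noteq> []" "wk D tail rv ?c1 qs c" "wk D tail rv c rs w"
      "c \<in> range bv" "\<forall>x\<in>set (butlast (tl (vl tail rv ?c1 qs))). x \<notin> range bv"
      using Cons.IH[OF w1 _ Cons.prems(3)] by blast
    obtain rest where vl1: "vl tail rv ?c1 qs = ?c1 # rest" by (cases qs) auto
    have "rest \<noteq> []" using IH(2) vl1 by (cases qs) auto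
    then have "butlast (tl (vl tail rv u (d # qs))) = ?c1 # butlast (tl (vl tail rv ?c1 qs))"
      using vl1 by simp
    then have int: "\<forall>x\<in>set (butlast (tl (vl tail rv u (d # qs)))). x \<notin> range bv"
      using IH(6) False by auto
    show ?thesis using IH dD int by (intro exI[of _ "d # qs"] exI[of _ rs] exI[of _ c]) auto
  qed
qed

end


locale hq = dq D tail rv sc d0 for D :: "'d set" and tail :: "'d \<Rightarrow> 'v" and rv sc d0 +
  fixes \<psi> :: "'v \<Rightarrow> int"
  assumes bcol: "bcoloring tail rv sc d0 \<psi>"
    and wind: "winding \<psi> (bwalk tail rv sc d0) = 0"
    and spk: "\<forall>P Q. spoke D tail rv sc d0 P \<and> base tail rv sc d0 P Q \<longrightarrow> int (length P) \<ge> \<bar>delta \<psi> Q\<bar>"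
begin

definition "dl t = dlt \<psi> (bv t) (bv (Suc t))"
definition "Hs n = (\<Sum>t<n. dl t)"
definition "H v = Hs (idx v)"

lemma psi_bv: "\<psi> (bv n) \<in> {1,2,3}"
  using bcol unfolding bcoloring_def bverts_eq by auto

lemma psi_ne: "\<psi> (bv n) \<noteq> \<psi> (bv (Suc n))"
proof -
  have "ob n \<in> outer_face rv sc d0" using ob_Ou outer_eq by simp
  then show ?thesis using bcol tail_rv_ob unfolding bcoloring_def bv_def by metis
qed

lemma Hs_Suc: "Hs (Suc n) = Hs n + dl n" unfolding Hs_def by simp

lemma Hs_add: "Hs (a + b) = Hs a + (\<Sum>t<b. dl (a + t))"
  by (induction b) (simp_all add: Hs_def)

lemma dl_per: "dl (t + k) = dl t" unfolding dl_def using bv_add_k[of t] bv_add_k[of "Suc t"] by simp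

lemma Hs_k: "Hs k = 0"
proof -
  have "delta \<psi> (bwalk tail rv sc d0) = 0" using wind unfolding winding_def by simp
  then show ?thesis unfolding bwalk_delta Hs_def dl_def .
qed

lemma Hs_per: "Hs (n + k) = Hs n"
proof -
  have "Hs (k + n) = Hs k + (\<Sum>t<n. dl (k + t))" by (rule Hs_add)
  also have "\<dots> = Hs n" using Hs_k dl_per unfolding Hs_def by (simp add: add.commute)
  finally show ?thesis by (simp add: add.commute)
qed

lemma Hs_mod: "Hs n = Hs (n mod k)"
proof (induction n rule: less_induct)
  case (less n)
  show ?case
  proof (cases "n < k")
    case True then show ?thesis by simp
  next
    case False
    then have "n = (n - k) + k" by simp
    then have "Hs n = Hs (n - k)" using Hs_per by metis
    also have "\<dots> = Hs ((n - k) mod k)" using less kpos False by simp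
    also have "(n - k) mod k = n mod k" using False by (simp add: mod_if)
    finally show ?thesis .
  qed
qed

lemma H_bv: "H (bv n) = Hs n" unfolding H_def idx_bv using Hs_mod by simp

lemma dl_pm: "dl t = 1 \<or> dl t = -1" unfolding dl_def by (rule dlt_pm)

lemma k_even: "even k"
proof -
  have "even (\<Sum>t<k. dl t)" using Hs_k unfolding Hs_def by simp
  moreover have "\<forall>t\<in>{..<k}. odd (dl t)" using dl_pm by (metis odd_one even_minus)
  ultimately show ?thesis using sum_odd_parity[of "{..<k}" dl] by simp
qed

lemma psi_mod: "(3::int) dvd (\<psi> (bv n) - \<psi> (bv 0) - Hs n)"
proof (induction n)
  case 0 then show ?case by (simp add: Hs_def)
next
  case (Suc n)
  have "(3::int) dvd (dl n - (\<psi> (bv (Suc n)) - \<psi> (bv n)))"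
    unfolding dl_def by (rule dlt_mod[of \<psi> "bv n" "bv (Suc n)", OF psi_bv psi_bv psi_ne])
  then have "(3::int) dvd ((\<psi> (bv n) - \<psi> (bv 0) - Hs n) - (dl n - (\<psi> (bv (Suc n)) - \<psi> (bv n))))"
    using Suc dvd_diff by blast
  then show ?case by (simp add: Hs_Suc algebra_simps)
qed


lemma bip: "\<exists>side :: 'v \<Rightarrow> int. (\<forall>v. side v \<in> {0,1}) \<and> (\<forall>d\<in>D. side (tail (rv d)) = 1 - side (tail d))"
proof -
  define f where "f = (\<lambda>d::'d. (1::bit))"
  have anti: "\<forall>d\<in>D. f (rv d) = - f d" unfolding f_def by simp
  have fsum: "\<forall>d\<in>D. (\<Sum>x\<in>orb fs d. f x) = 0"
  proof
    fix d assume d: "d \<in> D"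
    have "(\<Sum>x\<in>orb fs d. f x) = of_nat (card (orb fs d))" unfolding f_def by simp
    moreover have "even (card (orb fs d))"
    proof (cases "d \<in> Ou")
      case True
      then have "orb fs d = Ou" unfolding Ou_def using F.orb_eqI[OF d0D] by blast
      then show ?thesis using k_even k_def by simp
    next
      case False
      then show ?thesis using inner[OF d] unfolding Ou_def by simp
    qed
    ultimately show "(\<Sum>x\<in>orb fs d. f x) = 0" using bit_of_nat_even by simp
  qed
  obtain gb :: "'v \<Rightarrow> bit" where gb: "\<forall>d\<in>D. f d = gb (tail (rv d)) - gb (tail d)"
    using cobound[OF anti fsum] by blast
  define side where "side v = (if gb v = 0 then 0 else (1::int))" for v
  have "\<forall>d\<in>D. side (tail (rv d)) = 1 - side (tail d)"
  proof
    fix d assume "d \<in> D"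
    then have e: "1 = gb (tail (rv d)) - gb (tail d)" using gb unfolding f_def by simp
    show "side (tail (rv d)) = 1 - side (tail d)"
      using bit_cases[of "gb (tail (rv d))"] bit_cases[of "gb (tail d)"] e unfolding side_def by auto
  qed
  moreover have "\<forall>v. side v \<in> {0,1}" unfolding side_def by simp
  ultimately show ?thesis by blast
qed

definition "side = (SOME side :: 'v \<Rightarrow> int. (\<forall>v. side v \<in> {0,1}) \<and> (\<forall>d\<in>D. side (tail (rv d)) = 1 - side (tail d)))"

lemma side: "side v \<in> {0,1}" "d \<in> D \<Longrightarrow> side (tail (rv d)) = 1 - side (tail d)"
  using someI_ex[OF bip] unfolding side_def[symmetric] by auto

lemma side_bv: "(2::int) dvd (side (bv n) - side (bv 0) - Hs n)"
proof (induction n)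
  case 0 then show ?case by (simp add: Hs_def)
next
  case (Suc n)
  have s: "side (bv (Suc n)) = 1 - side (bv n)" using side(2)[OF ob_D, of n] tail_rv_ob bv_def by simp
  have "dl n = 1 \<or> dl n = -1" by (rule dl_pm)
  then show ?case using Suc s unfolding Hs_Suc by presburger
qed

lemma wk_side: "wk D tail rv u ps v \<Longrightarrow> (2::int) dvd (side v - side u - int (length ps))"
proof (induction ps arbitrary: u)
  case (Cons d ps)
  then have "(2::int) dvd (side v - side (tail (rv d)) - int (length ps))" and du: "d \<in> D" "tail d = u" by auto
  moreover have "side (tail (rv d)) = 1 - side u" using side(2)[OF du(1)] du(2) by simp
  ultimately show ?case by simp presburger
qed simp

lemma interior: "0 < i \<Longrightarrow> i < length L - 1 \<Longrightarrow> L ! i \<in> set (butlast (tl L))"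
proof -
  assume i: "0 < i" "i < length L - 1"
  have "butlast (tl L) ! (i - 1) = L ! i" using i by (simp add: nth_butlast nth_tl)
  moreover have "i - 1 < length (butlast (tl L))" using i by simp
  ultimately show ?thesis by (metis nth_mem)
qed

lemma crux: "\<forall>ps b' b. length ps = n \<longrightarrow> b' \<in> range bv \<longrightarrow> b \<in> range bv \<longrightarrow> wk D tail rv b' ps b
   \<longrightarrow> H b - H b' \<le> int n"
proof (induction n rule: less_induct)
  case (less n)
  show ?case
  proof (intro allI impI)
    fix ps b' b assume a: "length ps = n" "b' \<in> range bv" "b \<in> range bv" "wk D tail rv b' ps b"
    show "H b - H b' \<le> int n"
    proof (cases "ps = []")
      case True then have "b = b'" using a(4) by simp
      then show ?thesis by simp
    next
      case False
      obtain qs rs c where d: "ps = qs @ rs" "qs \<noteq> []" "wk D tail rv b' qs c" "wk D tail rv c rs b"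
        "c \<in> range bv" "\<forall>x\<in>set (butlast (tl (vl tail rv b' qs))). x \<notin> range bv"
        using first_ret[OF a(4) False a(3)] by blast
      have IHrs: "H b - H c \<le> int (length rs)"
        using less.IH[of "length rs"] d a by auto
      show ?thesis
      proof (cases "distinct (vl tail rv b' qs)")
        case False
        obtain qs' where q': "wk D tail rv b' qs' c" "length qs' < length qs" using shortcut[OF d(3) False] by blast
        then have "wk D tail rv b' (qs' @ rs) b" using d(4) by (auto simp: wk_append)
        moreover have "length (qs' @ rs) < n" using q' d a by simp
        ultimately have "H b - H b' \<le> int (length (qs' @ rs))" using less.IH a by blast
        then show ?thesis using \<open>length (qs' @ rs) < n\<close> by simp
      next
        case True
        have "H c - H b' \<le> int (length qs)"
        proof (cases "length qs = 1 \<and> (hd qs \<in> Ou \<or> rv (hd qs) \<in> Ou)")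
          case True
          then obtain x where qx: "qs = [x]" by (metis One_nat_def length_0_conv length_Suc_conv)
          then have x: "x \<in> D" "tail x = b'" "tail (rv x) = c" using d(3) by auto
          have "x \<in> Ou \<or> rv x \<in> Ou" using True qx by simp
          then show ?thesis
          proof
            assume "x \<in> Ou"
            then obtain j where "x = ob j" using Ou_ob by blast
            then have "b' = bv j" "c = bv (Suc j)" using x tail_rv_ob bv_def by auto
            then show ?thesis using H_bv Hs_Suc dl_pm[of j] qx by auto
          next
            assume "rv x \<in> Ou"
            then obtain j where j: "rv x = ob j" using Ou_ob by blast
            then have "c = bv j" using x bv_def by simp
            moreover have "b' = bv (Suc j)" using x rvrv[OF x(1)] j tail_rv_ob[of j] by simp
            ultimately show ?thesis using H_bv Hs_Suc dl_pm[of j] qx by auto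
          qed
        next
          case False
          define W where "W = vl tail rv b' qs"
          have W: "dpath_verts tail rv qs = W" unfolding W_def using wk_dpath[OF d(3) d(2)] .
          have lenW: "length W = Suc (length qs)" unfolding W_def by (rule vl_len)
          have hdW: "hd W = b'" unfolding W_def by (rule vl_hd)
          have lastW: "last W = c" unfolding W_def by (rule vl_last[OF d(3)])
          have ip: "is_path D tail rv qs"
            unfolding is_path_def W using d(2) wk_set[OF d(3)] wk_consec[OF d(3)] True W_def by blast
          have nb: "x \<notin> outer_face rv sc d0 \<and> rv x \<notin> outer_face rv sc d0" if xq: "x \<in> set qs" for x
          proof (rule ccontr)
            assume "\<not> ?thesis"
            then have xo: "x \<in> Ou \<or> rv x \<in> Ou" unfolding outer_eq by blast
            obtain j where j: "j < length qs" "x = qs ! j" using xq by (metis in_set_conv_nth)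
            have xD: "x \<in> D" using xq wk_set[OF d(3)] by blast
            have tv: "tail x = W ! j" "tail (rv x) = W ! Suc j" using wk_nth[OF d(3) j(1)] j(2) W_def by auto
            have bb: "tail x \<in> range bv" "tail (rv x) \<in> range bv" using Bedge_verts[OF xD xo] by auto
            have j0: "j = 0"
            proof (rule ccontr)
              assume "j \<noteq> 0"
              then have "W ! j \<in> set (butlast (tl W))" using interior[of j W] lenW j by simp
              then show False using d(6) bb tv W_def by auto
            qed
            have j1: "Suc j = length qs"
            proof (rule ccontr)
              assume "Suc j \<noteq> length qs"
              then have "W ! Suc j \<in> set (butlast (tl W))" using interior[of "Suc j" W] lenW j by simp
              then show False using d(6) bb tv W_def by auto
            qed
            have "length qs = 1" using j0 j1 by simp
            moreover have "hd qs = x" using j0 j d(2) by (simp add: hd_conv_nth)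
            ultimately show False using False xo by simp
          qed
          have spoke: "spoke D tail rv sc d0 qs"
            unfolding spoke_def Let_def W bverts_eq using ip hdW lastW a(2) d(5) d(6) nb W_def by auto
          define i where "i = idx b'"
          define j where "j = idx c"
          define m where "m = (j + k - i) mod k"
          have ik: "i < k" "j < k" using idx_lt a(2) d(5) i_def j_def by auto
          have mk: "m < k" unfolding m_def using kpos by simp
          have b'i: "bv i = b'" using bv_idx a(2) i_def by simp
          have im: "(i + m) mod k = j"
          proof -
            have "(i + m) mod k = (i + (j + k - i)) mod k" unfolding m_def by (simp add: mod_add_right_eq)
            also have "i + (j + k - i) = j + k" using ik by simp
            finally show ?thesis using ik by simp
          qed
          have cim: "bv (i + m) = c" using bv_mod[of "i + m"] im bv_idx d(5) j_def by simp
          define Q where "Q = map (\<lambda>t. bvert tail rv sc d0 (i + t)) [0..<m + 1]"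
          have Qb: "Q = map (\<lambda>t. bv (i + t)) [0..<Suc m]" unfolding Q_def bvert_eq by simp
          have "base tail rv sc d0 qs Q"
            unfolding base_def W
          proof (intro conjI)
            show "\<exists>i m. i < card (outer_face rv sc d0) \<and> m < card (outer_face rv sc d0) \<and>
              (Q = map (\<lambda>t. bvert tail rv sc d0 (i + t)) [0..<m + 1] \<or>
               Q = rev (map (\<lambda>t. bvert tail rv sc d0 (i + t)) [0..<m + 1]))"
              using ik mk unfolding outer_eq k_def[symmetric] Q_def by blast
            show "hd Q = hd W" unfolding Qb hdW using b'i by (simp add: upt_conv_Cons del: upt_Suc)
            show "last Q = last W" unfolding Qb lastW using cim by simp
          qed
          then have "int (length qs) \<ge> \<bar>delta \<psi> Q\<bar>" using spk spoke by blast
          moreover have "delta \<psi> Q = H c - H b'"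
          proof -
            have "delta \<psi> Q = (\<Sum>t<m. dlt \<psi> (bv (i + t)) (bv (Suc (i + t))))"
              unfolding Qb delta_map by simp
            also have "\<dots> = (\<Sum>t<m. dl (i + t))" unfolding dl_def by simp
            also have "\<dots> = Hs (i + m) - Hs i" using Hs_add[of i m] by simp
            also have "\<dots> = H c - H b'" using H_bv cim b'i by metis
            finally show ?thesis .
          qed
          ultimately show ?thesis by simp
        qed
        then show ?thesis using IHrs d(1) a(1) by simp
      qed
    qed
  qed
qed


lemma range_bv: "range bv = bv ` {..<k}"
proof
  show "range bv \<subseteq> bv ` {..<k}"
  proof
    fix x assume "x \<in> range bv"
    then obtain n where "x = bv n" by blast
    then have "x = bv (n mod k)" using bv_mod by simp
    then show "x \<in> bv ` {..<k}" using kpos by simp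
  qed
qed auto

lemma fin_bv: "finite (range bv)" unfolding range_bv by simp

lemma ex_wk: "v \<in> verts D tail \<Longrightarrow> b \<in> range bv \<Longrightarrow> \<exists>ps. wk D tail rv b ps v"
proof -
  assume v: "v \<in> verts D tail" and b: "b \<in> range bv"
  obtain x where x: "x \<in> D" "v = tail x" using v unfolding verts_def by blast
  obtain n where "b = bv n" using b by blast
  then have "b = tail (ob n)" by (simp add: bv_def)
  then show ?thesis using conn_wk[OF ob_D x(1)] x(2) by simp
qed

definition "hh v = Min ((\<lambda>b. H b + int (dist b v)) ` range bv)"

lemma hh_le: "b \<in> range bv \<Longrightarrow> hh v \<le> H b + int (dist b v)"
  unfolding hh_def using fin_bv by (intro Min_le) auto

lemma hh_att: "\<exists>b\<in>range bv. hh v = H b + int (dist b v)"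
proof -
  have "hh v \<in> (\<lambda>b. H b + int (dist b v)) ` range bv" unfolding hh_def using fin_bv by (intro Min_in) auto
  then show ?thesis by blast
qed

lemma bv_verts: "bv n \<in> verts D tail" unfolding bv_def verts_def using ob_D by simp

lemma hh_B: "hh (bv n) = Hs n"
proof (rule antisym)
  have "dist (bv n) (bv n) \<le> 0" using dist_le[of "bv n" "[]" "bv n"] by simp
  then show "hh (bv n) \<le> Hs n" using hh_le[of "bv n" "bv n"] H_bv by simp
next
  obtain b where b: "b \<in> range bv" "hh (bv n) = H b + int (dist b (bv n))" using hh_att by blast
  obtain ps where "wk D tail rv b ps (bv n)" using ex_wk[OF bv_verts b(1)] by blast
  then obtain qs where qs: "wk D tail rv b qs (bv n)" "length qs = dist b (bv n)" using dist_wk by blast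
  then have "H (bv n) - H b \<le> int (dist b (bv n))" using crux b(1) by blast
  then show "Hs n \<le> hh (bv n)" using b H_bv by simp
qed

lemma hh_edge: assumes d: "d \<in> D" shows "hh (tail (rv d)) \<le> hh (tail d) + 1"
proof -
  obtain b where b: "b \<in> range bv" "hh (tail d) = H b + int (dist b (tail d))" using hh_att by blast
  obtain ps where "wk D tail rv b ps (tail d)" using ex_wk[OF _ b(1)] d unfolding verts_def by blast
  then obtain qs where qs: "wk D tail rv b qs (tail d)" "length qs = dist b (tail d)" using dist_wk by blast
  then have "wk D tail rv b (qs @ [d]) (tail (rv d))" using d by (auto simp: wk_append)
  then have "dist b (tail (rv d)) \<le> dist b (tail d) + 1" using dist_le qs(2) by fastforce
  moreover have "hh (tail (rv d)) \<le> H b + int (dist b (tail (rv d)))" using hh_le[OF b(1)] .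
  ultimately show ?thesis using b(2) by simp
qed

lemma hh_par: assumes v: "v \<in> verts D tail" shows "(2::int) dvd (hh v - side v + side (bv 0))"
proof -
  obtain b where b: "b \<in> range bv" "hh v = H b + int (dist b v)" using hh_att by blast
  obtain n where n: "b = bv n" using b(1) by blast
  obtain ps where "wk D tail rv b ps v" using ex_wk[OF v b(1)] by blast
  then obtain qs where qs: "wk D tail rv b qs v" "length qs = dist b v" using dist_wk by blast
  have e1: "(2::int) dvd (side v - side b - int (dist b v))" using wk_side[OF qs(1)] qs(2) by simp
  have e2: "(2::int) dvd (side b - side (bv 0) - Hs n)" using side_bv n by simp
  have "H b = Hs n" using n H_bv by simp
  then show ?thesis using b(2) ar_par[OF e1 e2] by simp
qed

lemma hh_step: assumes d: "d \<in> D"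
  shows "hh (tail (rv d)) = hh (tail d) + 1 \<or> hh (tail (rv d)) = hh (tail d) - 1"
proof -
  have a: "hh (tail (rv d)) \<le> hh (tail d) + 1" by (rule hh_edge[OF d])
  have b: "hh (tail d) \<le> hh (tail (rv d)) + 1" using hh_edge[OF rvD[OF d]] rvrv[OF d] by simp
  have "(2::int) dvd (hh (tail d) - side (tail d) + side (bv 0))" using hh_par d unfolding verts_def by simp
  moreover have "(2::int) dvd (hh (tail (rv d)) - side (tail (rv d)) + side (bv 0))"
    using hh_par rvD[OF d] unfolding verts_def by simp
  moreover have "side (tail (rv d)) = 1 - side (tail d)" using side(2)[OF d] .
  ultimately show ?thesis using ar_step[OF a b] by simp
qed

theorem hard: "\<exists>\<phi>. coloring D tail rv \<phi> \<and> (\<forall>v\<in>bverts tail rv sc d0. \<phi> v = \<psi> v)"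
proof -
  define \<phi> where "\<phi> v = (\<psi> (bv 0) - 1 + hh v) mod 3 + 1" for v
  have "coloring D tail rv \<phi>"
    unfolding coloring_def
  proof (intro conjI ballI)
    fix v show "\<phi> v \<in> {1,2,3}" unfolding \<phi>_def by (rule ar_range)
  next
    fix d assume d: "d \<in> D"
    show "\<phi> (tail d) \<noteq> \<phi> (tail (rv d))" using ar_col[OF hh_step[OF d]] unfolding \<phi>_def by metis
  qed
  moreover have "\<forall>v\<in>bverts tail rv sc d0. \<phi> v = \<psi> v"
  proof
    fix v assume "v \<in> bverts tail rv sc d0"
    then obtain n where n: "v = bv n" unfolding bverts_eq by blast
    have "(3::int) dvd (\<psi> (bv n) - \<psi> (bv 0) - Hs n)" by (rule psi_mod)
    moreover have "\<psi> (bv n) \<in> {1,2,3}" by (rule psi_bv)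
    ultimately show "\<phi> v = \<psi> v" unfolding \<phi>_def n hh_B by (rule ar_ext)
  qed
  ultimately show ?thesis by blast
qed

end


lemma lemma2p1_aux:
  fixes D :: "'d set" and tail :: "'d \<Rightarrow> 'v" and rv sc :: "'d \<Rightarrow> 'd" and d0 :: 'd
  assumes "disk_quadrangulation D tail rv sc d0"
  shows "dq D tail rv sc d0"
proof -
  have A: "finite D" "d0 \<in> D" "\<forall>d\<in>D. rv d \<in> D \<and> rv (rv d) = d \<and> rv d \<noteq> d \<and> tail (rv d) \<noteq> tail d"
    "bij_betw sc D D" "\<forall>d\<in>D. orb sc d = {d'\<in>D. tail d' = tail d}" "map_connected D rv sc"
    "int (card (verts D tail)) - int (card D div 2) + int (card {orb (face_succ rv sc) d | d. d \<in> D}) = 2"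
    "inj_on tail (outer_face rv sc d0)" "\<forall>d\<in>outer_face rv sc d0. rv d \<notin> outer_face rv sc d0"
    "\<forall>d\<in>D. d \<notin> outer_face rv sc d0 \<longrightarrow> card (orb (face_succ rv sc) d) = 4 \<and> inj_on tail (orb (face_succ rv sc) d)"
    using assms unfolding disk_quadrangulation_def by blast+
  interpret qmap D tail rv sc
    using A by unfold_locales auto
  show ?thesis
    using A by unfold_locales (auto simp: outer_face_def)
qed

theorem lemma2p1:
  fixes D :: "'d set" and tail :: "'d \<Rightarrow> 'v" and rv sc :: "'d \<Rightarrow> 'd" and d0 :: 'd
    and \<psi> :: "'v \<Rightarrow> int"
  assumes "disk_quadrangulation D tail rv sc d0"
    and "bcoloring tail rv sc d0 \<psi>"
    and "winding \<psi> (bwalk tail rv sc d0) = 0"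
  shows "(\<exists>\<phi>. coloring D tail rv \<phi> \<and> (\<forall>v\<in>bverts tail rv sc d0. \<phi> v = \<psi> v)) \<longleftrightarrow>
         (\<forall>P Q. spoke D tail rv sc d0 P \<and> base tail rv sc d0 P Q \<longrightarrow>
                 int (length P) \<ge> \<bar>delta \<psi> Q\<bar>)"
proof -
  interpret dq D tail rv sc d0 using lemma2p1_aux[OF assms(1)] .
  show ?thesis
  proof
    assume "\<exists>\<phi>. coloring D tail rv \<phi> \<and> (\<forall>v\<in>bverts tail rv sc d0. \<phi> v = \<psi> v)"
    then obtain \<phi> where \<phi>: "coloring D tail rv \<phi>" "\<forall>v\<in>bverts tail rv sc d0. \<phi> v = \<psi> v" by blast
    have ext: "\<forall>v\<in>range bv. \<phi> v = \<psi> v" using \<phi>(2) bverts_eq by simp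
    show "\<forall>P Q. spoke D tail rv sc d0 P \<and> base tail rv sc d0 P Q \<longrightarrow> int (length P) \<ge> \<bar>delta \<psi> Q\<bar>"
      using easy[OF \<phi>(1) ext assms(3)] by blast
  next
    assume spk: "\<forall>P Q. spoke D tail rv sc d0 P \<and> base tail rv sc d0 P Q \<longrightarrow> int (length P) \<ge> \<bar>delta \<psi> Q\<bar>"
    interpret hq D tail rv sc d0 \<psi>
      using assms(2,3) spk by unfold_locales auto
    show "\<exists>\<phi>. coloring D tail rv \<phi> \<and> (\<forall>v\<in>bverts tail rv sc d0. \<phi> v = \<psi> v)" by (rule hard)
  qed
qed

end
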